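(* Let $\Omega\subset\mathbb{R}^N$ be an unbounded domain, $a\in C(\bar\Omega)\cap L^\infty(\Omega)$, and $K:\Omega\times\Omega\to[0,\infty)$ such that for every $x\in\Omega$ the map $K(x,\cdot)$ is measurable, for almost every $y\in\Omega$ the map $K(\cdot,y)$ is uniformly continuous, and there exist $r_0\ge r_1>0$, $C_0\ge c_0>0$ with $C_0\,\mathbb{1}_{\Omega\cap B_{r_0}(x)}(y)\ge K(x,y)\ge c_0\,\mathbb{1}_{\Omega\cap B_{r_1}(x)}(y)$ for all $x,y\in\Omega$. Assume further that $K$ is symmetric and $p(x):=\int_\Omega K(x,y)\,dy\in L^\infty(\Omega)$. Let $\Omega_n:=\Omega\cap B_n(0)$. Then $$\lambda_p(\mathcal{L}_\Omega+a)\le\liminf_{n\to\infty}\lambda_v(\mathcal{L}_{\Omega_n}+a)\le\lambda_p'(\mathcal{L}_\Omega+a).$$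
   Context: For $D\subset\Omega$, $\mathcal{L}_D[\varphi](x):=\int_D K(x,y)\varphi(y)\,dy$. $\lambda_p(\mathcal{L}_\Omega+a):=\sup\{\lambda:\exists\varphi\in C(\bar\Omega),\ \varphi>0,\ \mathcal{L}_\Omega[\varphi]+a\varphi+\lambda\varphi\le0\text{ in }\Omega\}$; $\lambda_p'(\mathcal{L}_\Omega+a):=\inf\{\lambda:\exists\varphi\in C(\Omega)\cap L^\infty(\Omega),\ \varphi\ge0,\ \varphi\not\equiv0,\ \mathcal{L}_\Omega[\varphi]+(a+\lambda)\varphi\ge0\text{ in }\Omega\}$; $\lambda_v(\mathcal{L}_D+a):=\inf_{\varphi\in L^2(D),\varphi\not\equiv0}-\frac{\langle\mathcal{L}_D[\varphi]+a\varphi,\varphi\rangle_{L^2(D)}}{\|\varphi\|_{L^2(D)}^2}$. If $\Omega_n$ is not connected, the same definitions are used verbatim. *)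

theory Defs
  imports "HOL-Analysis.Analysis"
begin

definition nlop :: "('a::euclidean_space \<Rightarrow> 'a \<Rightarrow> real) \<Rightarrow> 'a set \<Rightarrow> ('a \<Rightarrow> real) \<Rightarrow> 'a \<Rightarrow> real" where
  "nlop K D \<phi> x = (LINT y|lebesgue_on D. K x y * \<phi> y)"

definition Linfty :: "'a measure \<Rightarrow> ('a \<Rightarrow> real) \<Rightarrow> bool" where
  "Linfty M f \<longleftrightarrow> f \<in> borel_measurable M \<and> (\<exists>B. AE x in M. \<bar>f x\<bar> \<le> B)"

definition L2 :: "'a measure \<Rightarrow> ('a \<Rightarrow> real) \<Rightarrow> bool" where
  "L2 M f \<longleftrightarrow> f \<in> borel_measurable M \<and> integrable M (\<lambda>x. (f x)\<^sup>2)"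

definition lambda_p :: "('a::euclidean_space \<Rightarrow> 'a \<Rightarrow> real) \<Rightarrow> ('a \<Rightarrow> real) \<Rightarrow> 'a set \<Rightarrow> ereal" where
  "lambda_p K a \<Omega> = Sup (ereal ` {l. \<exists>\<phi>. continuous_on (closure \<Omega>) \<phi> \<and>
        (\<forall>x\<in>closure \<Omega>. \<phi> x > 0) \<and>
        (\<forall>x\<in>\<Omega>. nlop K \<Omega> \<phi> x + a x * \<phi> x + l * \<phi> x \<le> 0)})"

definition lambda_p' :: "('a::euclidean_space \<Rightarrow> 'a \<Rightarrow> real) \<Rightarrow> ('a \<Rightarrow> real) \<Rightarrow> 'a set \<Rightarrow> ereal" where
  "lambda_p' K a \<Omega> = Inf (ereal ` {l. \<exists>\<phi>. continuous_on \<Omega> \<phi> \<and> Linfty (lebesgue_on \<Omega>) \<phi> \<and>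
        (\<forall>x\<in>\<Omega>. \<phi> x \<ge> 0) \<and> (\<exists>x\<in>\<Omega>. \<phi> x \<noteq> 0) \<and>
        (\<forall>x\<in>\<Omega>. nlop K \<Omega> \<phi> x + (a x + l) * \<phi> x \<ge> 0)})"

definition lambda_v :: "('a::euclidean_space \<Rightarrow> 'a \<Rightarrow> real) \<Rightarrow> ('a \<Rightarrow> real) \<Rightarrow> 'a set \<Rightarrow> ereal" where
  "lambda_v K a D = Inf (ereal ` {- (LINT x|lebesgue_on D. (nlop K D \<phi> x + a x * \<phi> x) * \<phi> x)
                                    / (LINT x|lebesgue_on D. (\<phi> x)\<^sup>2) | \<phi>.
        L2 (lebesgue_on D) \<phi> \<and> \<not> (AE x in lebesgue_on D. \<phi> x = 0)})"

end

theory Submission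
  imports Defs "HOL-Real_Asymp.Real_Asymp"
begin

locale kern =
  fixes \<Omega> :: "'n::euclidean_space set" and K :: "'n \<Rightarrow> 'n \<Rightarrow> real" and r0 C0 :: real
  assumes opn: "open \<Omega>" and ne: "\<Omega> \<noteq> {}"
    and Knn: "\<And>x y. x\<in>\<Omega> \<Longrightarrow> y\<in>\<Omega> \<Longrightarrow> K x y \<ge> 0"
    and Kup: "\<And>x y. x\<in>\<Omega> \<Longrightarrow> y\<in>\<Omega> \<Longrightarrow> K x y \<le> C0 * indicator (\<Omega> \<inter> ball x r0) y"
    and Kmeas: "\<And>x. x\<in>\<Omega> \<Longrightarrow> K x \<in> borel_measurable (lebesgue_on \<Omega>)"
    and Kuc: "AE y in lebesgue_on \<Omega>. uniformly_continuous_on \<Omega> (\<lambda>x. K x y)"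
    and Ksym: "\<And>x y. x\<in>\<Omega> \<Longrightarrow> y\<in>\<Omega> \<Longrightarrow> K x y = K y x"
    and C0: "C0 > 0" and r0: "r0 > 0"
begin

lemma Om_leb: "\<Omega> \<in> sets lebesgue"
  using opn by (simp add: borel_open)

lemma exN: "\<exists>N. N \<in> null_sets lebesgue \<and> (\<forall>y\<in>\<Omega>-N. continuous_on \<Omega> (\<lambda>x. K x y))"
proof -
  have s: "\<Omega> \<inter> space lebesgue \<in> sets lebesgue" using Om_leb by simp
  have ae: "AE y in lebesgue. y \<in> \<Omega> \<longrightarrow> uniformly_continuous_on \<Omega> (\<lambda>x. K x y)"
    using Kuc unfolding AE_restrict_space_iff[OF s] .
  then obtain N where N: "{y \<in> space lebesgue. \<not> (y \<in> \<Omega> \<longrightarrow> uniformly_continuous_on \<Omega> (\<lambda>x. K x y))} \<subseteq> N" "N \<in> null_sets lebesgue"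
  proof (rule AE_E)
    fix N assume "{y \<in> space lebesgue. \<not> (y \<in> \<Omega> \<longrightarrow> uniformly_continuous_on \<Omega> (\<lambda>x. K x y))} \<subseteq> N"
      "emeasure lebesgue N = 0" "N \<in> sets lebesgue"
    then show thesis by (intro that null_setsI)
  qed
  show ?thesis
  proof (intro exI[of _ N] conjI ballI)
    show "N \<in> null_sets lebesgue" by fact
    fix y assume "y \<in> \<Omega> - N"
    then have "uniformly_continuous_on \<Omega> (\<lambda>x. K x y)" using N(1) by auto
    then show "continuous_on \<Omega> (\<lambda>x. K x y)" by (rule uniformly_continuous_imp_continuous)
  qed
qed

definition "NN = (SOME N. N \<in> null_sets lebesgue \<and> (\<forall>y\<in>\<Omega>-N. continuous_on \<Omega> (\<lambda>x. K x y)))"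

lemma NN: "NN \<in> null_sets lebesgue" "\<And>y. y\<in>\<Omega> \<Longrightarrow> y \<notin> NN \<Longrightarrow> continuous_on \<Omega> (\<lambda>x. K x y)"
proof -
  have "NN \<in> null_sets lebesgue \<and> (\<forall>y\<in>\<Omega>-NN. continuous_on \<Omega> (\<lambda>x. K x y))"
    unfolding NN_def by (rule someI_ex[OF exN])
  then show "NN \<in> null_sets lebesgue" "\<And>y. y\<in>\<Omega> \<Longrightarrow> y \<notin> NN \<Longrightarrow> continuous_on \<Omega> (\<lambda>x. K x y)" by auto
qed

definition "K' x y = (if y \<in> NN then 0 else K x y)"

lemma exd: "\<exists>d::nat \<Rightarrow> 'n. range d \<subseteq> \<Omega> \<and> (\<forall>x\<in>\<Omega>. \<forall>e>0. \<exists>i. dist x (d i) < e)"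
proof -
  obtain D :: "'n set" where D: "countable D" "\<And>X. open X \<Longrightarrow> X \<noteq> {} \<Longrightarrow> \<exists>d\<in>D. d \<in> X"
    using countable_dense_exists by blast
  have "D \<inter> \<Omega> \<noteq> {}" using D(2)[OF opn ne] by auto
  let ?d = "from_nat_into (D \<inter> \<Omega>)"
  have r: "range ?d = D \<inter> \<Omega>"
    using D(1) \<open>D \<inter> \<Omega> \<noteq> {}\<close> by (simp add: range_from_nat_into)
  show ?thesis
  proof (intro exI[of _ ?d] conjI ballI allI impI)
    show "range ?d \<subseteq> \<Omega>" using r by auto
    fix x e assume x: "x \<in> \<Omega>" and e: "(e::real) > 0"
    have "x \<in> ball x e \<inter> \<Omega>" using x e by simp
    then have "open (ball x e \<inter> \<Omega>)" "ball x e \<inter> \<Omega> \<noteq> {}" using opn by (auto simp del: Int_iff mem_ball)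
    then obtain c where "c \<in> D" "c \<in> ball x e \<inter> \<Omega>" using D(2) by blast
    then have "c \<in> range ?d" using r by auto
    then obtain i where "c = ?d i" by auto
    then show "\<exists>i. dist x (?d i) < e" using \<open>c \<in> ball x e \<inter> \<Omega>\<close> by auto
  qed
qed

definition "dd = (SOME d::nat \<Rightarrow> 'n. range d \<subseteq> \<Omega> \<and> (\<forall>x\<in>\<Omega>. \<forall>e>0. \<exists>i. dist x (d i) < e))"

lemma dd: "dd i \<in> \<Omega>" "\<And>x e. x\<in>\<Omega> \<Longrightarrow> e > 0 \<Longrightarrow> \<exists>i. dist x (dd i) < e"
proof -
  have "range dd \<subseteq> \<Omega> \<and> (\<forall>x\<in>\<Omega>. \<forall>e>0. \<exists>i. dist x (dd i) < e)"
    unfolding dd_def by (rule someI_ex[OF exd])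
  then show "dd i \<in> \<Omega>" "\<And>x e. x\<in>\<Omega> \<Longrightarrow> e > 0 \<Longrightarrow> \<exists>i. dist x (dd i) < e" by auto
qed

lemma K'_meas:
  assumes D: "D \<subseteq> \<Omega>" "D \<in> sets lebesgue"
  shows "(\<lambda>z. K' (fst z) (snd z)) \<in> borel_measurable (lebesgue_on D \<Otimes>\<^sub>M lebesgue_on D)"
proof -
  let ?M = "lebesgue_on D \<Otimes>\<^sub>M lebesgue_on D"
  define idx where "idx k x = (LEAST i. dist x (dd i) < inverse (real (Suc k)))" for k x
  have meas_i: "(\<lambda>y. K' (dd i) y) \<in> borel_measurable (lebesgue_on D)" for i
  proof -
    have "K (dd i) \<in> borel_measurable (lebesgue_on D)"
      using measurable_restrict_mono[OF Kmeas[OF dd(1)] D(1)] .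
    moreover have "indicator (- NN) \<in> borel_measurable (lebesgue_on D)"
      using NN(1) by (intro measurable_restrict_space1) (auto simp: Compl_eq_Diff_UNIV)
    ultimately have "(\<lambda>y. indicator (- NN) y * K (dd i) y) \<in> borel_measurable (lebesgue_on D)"
      by measurable
    then show ?thesis by (rule measurable_cong[THEN iffD1, rotated]) (auto simp: K'_def indicator_def)
  qed
  have dist_meas: "(\<lambda>x. dist x c) \<in> borel_measurable (lebesgue_on D)" for c :: 'n
    by (rule continuous_imp_measurable_on_sets_lebesgue[OF _ D(2)]) (intro continuous_intros)
  have idx_meas: "(\<lambda>z. idx k (fst z)) \<in> ?M \<rightarrow>\<^sub>M count_space UNIV" for k
  proof -
    have "(\<lambda>x. idx k x) \<in> lebesgue_on D \<rightarrow>\<^sub>M count_space UNIV"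
      unfolding idx_def using dist_meas by measurable
    then show ?thesis by measurable
  qed
  have fk: "(\<lambda>z. K' (dd (idx k (fst z))) (snd z)) \<in> borel_measurable ?M" for k
    by (rule measurable_compose_countable[OF _ idx_meas]) (use meas_i in measurable)
  show ?thesis
  proof (rule borel_measurable_LIMSEQ_real[OF _ fk])
    fix z assume "z \<in> space ?M"
    then obtain x y where z: "z = (x,y)" "x \<in> D" "y \<in> D" by (auto simp: space_pair_measure)
    have xO: "x \<in> \<Omega>" using z D by auto
    have dk: "dist x (dd (idx k x)) < inverse (real (Suc k))" for k
      unfolding idx_def by (rule LeastI_ex) (use dd(2)[OF xO] in auto)
    have conv: "(\<lambda>k. dd (idx k x)) \<longlonglongrightarrow> x"
    proof -
      have "(\<lambda>k. dist (dd (idx k x)) x) \<longlonglongrightarrow> 0"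
      proof (rule Lim_null_comparison[OF always_eventually LIMSEQ_inverse_real_of_nat])
        show "\<forall>k. norm (dist (dd (idx k x)) x) \<le> inverse (real (Suc k))"
          using dk by (simp add: dist_commute less_imp_le)
      qed
      then show ?thesis by (rule tendsto_dist_iff[THEN iffD2])
    qed
    show "(\<lambda>k. K' (dd (idx k (fst z))) (snd z)) \<longlonglongrightarrow> K' (fst z) (snd z)"
    proof (cases "y \<in> NN")
      case True then show ?thesis using z by (simp add: K'_def)
    next
      case False
      have "(\<lambda>k. K (dd (idx k x)) y) \<longlonglongrightarrow> K x y"
        by (rule continuous_on_tendsto_compose[OF NN(2) conv xO]) (use False z D dd(1) in auto)
      then show ?thesis using z False by (simp add: K'_def)
    qed
  qed
qed

end

context kern begin

lemma Kbd: "x\<in>\<Omega> \<Longrightarrow> y\<in>\<Omega> \<Longrightarrow> 0 \<le> K x y \<and> K x y \<le> C0"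
  using Knn[of x y] Kup[of x y] C0 by (cases "dist x y < r0") (auto simp: indicator_def)

lemma Kzero: "x\<in>\<Omega> \<Longrightarrow> y\<in>\<Omega> \<Longrightarrow> dist x y \<ge> r0 \<Longrightarrow> K x y = 0"
  using Knn[of x y] Kup[of x y] by (auto simp: indicator_def)

lemma K'bd: "x\<in>\<Omega> \<Longrightarrow> y\<in>\<Omega> \<Longrightarrow> 0 \<le> K' x y \<and> K' x y \<le> C0"
  using Kbd[of x y] C0 by (auto simp: K'_def)


context
  fixes S assumes S: "S \<subseteq> \<Omega>" "S \<in> sets lebesgue" "bounded S"
begin

lemma AE_NN: "AE y in lebesgue_on S. y \<notin> NN"
proof -
  have "AE y in lebesgue. y \<notin> NN" using AE_not_in[OF NN(1)] .
  then have "AE y in lebesgue. y \<in> S \<longrightarrow> y \<notin> NN" by (rule eventually_mono) simp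
  then show ?thesis
    by (rule AE_restrict_space_iff[THEN iffD2, rotated]) (use S in simp)
qed

lemma fm: "finite_measure (lebesgue_on S)"
  using S by (intro finite_measure_lebesgue_on bounded_set_imp_lmeasurable) auto

lemma Kmeas_S: "x\<in>\<Omega> \<Longrightarrow> K x \<in> borel_measurable (lebesgue_on S)"
  using measurable_restrict_mono[OF Kmeas S(1)] .

lemma K'meas_S: "x\<in>\<Omega> \<Longrightarrow> K' x \<in> borel_measurable (lebesgue_on S)"
proof -
  assume x: "x\<in>\<Omega>"
  have "indicator (- NN) \<in> borel_measurable (lebesgue_on S)"
    using NN(1) by (intro measurable_restrict_space1) (auto simp: Compl_eq_Diff_UNIV)
  then have "(\<lambda>y. indicator (- NN) y * K x y) \<in> borel_measurable (lebesgue_on S)"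
    using Kmeas_S[OF x] by measurable
  then show ?thesis by (rule measurable_cong[THEN iffD1, rotated]) (auto simp: K'_def indicator_def)
qed

lemma Kint: "x\<in>\<Omega> \<Longrightarrow> integrable (lebesgue_on S) f \<Longrightarrow> integrable (lebesgue_on S) (\<lambda>y. K x y * f y)"
proof -
  assume x: "x\<in>\<Omega>" and f: "integrable (lebesgue_on S) f"
  show ?thesis
  proof (rule Bochner_Integration.integrable_bound[OF integrable_mult_right[OF f, of C0]])
    show "(\<lambda>y. K x y * f y) \<in> borel_measurable (lebesgue_on S)"
      using Kmeas_S[OF x] f by measurable
    show "AE y in lebesgue_on S. norm (K x y * f y) \<le> norm (C0 * f y)"
      by (rule AE_I2) (use Kbd[OF x] S C0 in \<open>auto simp: abs_mult intro!: mult_right_mono\<close>)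
  qed
qed

lemma K'int: "x\<in>\<Omega> \<Longrightarrow> integrable (lebesgue_on S) f \<Longrightarrow> integrable (lebesgue_on S) (\<lambda>y. K' x y * f y)"
proof -
  assume x: "x\<in>\<Omega>" and f: "integrable (lebesgue_on S) f"
  show ?thesis
  proof (rule Bochner_Integration.integrable_bound[OF integrable_mult_right[OF f, of C0]])
    show "(\<lambda>y. K' x y * f y) \<in> borel_measurable (lebesgue_on S)"
      using K'meas_S[OF x] f by measurable
    show "AE y in lebesgue_on S. norm (K' x y * f y) \<le> norm (C0 * f y)"
      by (rule AE_I2) (use K'bd[OF x] S C0 in \<open>auto simp: abs_mult intro!: mult_right_mono\<close>)
  qed
qed

lemma nlop_bd: "x\<in>\<Omega> \<Longrightarrow> integrable (lebesgue_on S) f \<Longrightarrow> \<bar>nlop K S f x\<bar> \<le> C0 * (LINT y|lebesgue_on S. \<bar>f y\<bar>)"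
proof -
  assume x: "x\<in>\<Omega>" and f: "integrable (lebesgue_on S) f"
  have "\<bar>nlop K S f x\<bar> \<le> (LINT y|lebesgue_on S. C0 * \<bar>f y\<bar>)"
    unfolding nlop_def
    by (rule integral_abs_bound_integral[OF Kint[OF x f]])
       (use f Kbd[OF x] S C0 in \<open>auto simp: abs_mult intro!: mult_right_mono\<close>)
  then show ?thesis by simp
qed

lemma nlop_K': "x\<in>\<Omega> \<Longrightarrow> f \<in> borel_measurable (lebesgue_on S) \<Longrightarrow> nlop K S f x = (LINT y|lebesgue_on S. K' x y * f y)"
  unfolding nlop_def
proof (rule integral_cong_AE)
  assume x: "x\<in>\<Omega>" and f: "f \<in> borel_measurable (lebesgue_on S)"
  show "(\<lambda>y. K x y * f y) \<in> borel_measurable (lebesgue_on S)" using Kmeas_S[OF x] f by measurable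
  show "(\<lambda>y. K' x y * f y) \<in> borel_measurable (lebesgue_on S)" using K'meas_S[OF x] f by measurable
  show "AE y in lebesgue_on S. K x y * f y = K' x y * f y"
    using AE_NN by (rule eventually_mono) (simp add: K'_def)
qed

lemma K'_meas2: "(\<lambda>z. K' (fst z) (snd z)) \<in> borel_measurable (lebesgue_on S \<Otimes>\<^sub>M lebesgue_on S)"
  using K'_meas[OF S(1,2)] .

lemma nlop_meas: "integrable (lebesgue_on S) f \<Longrightarrow> nlop K S f \<in> borel_measurable (lebesgue_on S)"
proof -
  assume f: "integrable (lebesgue_on S) f"
  interpret finite_measure "lebesgue_on S" by (rule fm)
  have "case_prod (\<lambda>x y. K' x y * f y) \<in> borel_measurable (lebesgue_on S \<Otimes>\<^sub>M lebesgue_on S)"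
    using K'_meas2 f by (simp add: case_prod_beta') measurable
  then have "(\<lambda>x. LINT y|lebesgue_on S. K' x y * f y) \<in> borel_measurable (lebesgue_on S)"
    by (rule borel_measurable_lebesgue_integral)
  then show ?thesis
    by (rule measurable_cong[THEN iffD1, rotated]) (use nlop_K' f S in auto)
qed

lemma intS_bounded: "u \<in> borel_measurable (lebesgue_on S) \<Longrightarrow> (\<And>x. x \<in> S \<Longrightarrow> \<bar>u x\<bar> \<le> (B::real)) \<Longrightarrow> integrable (lebesgue_on S) u"
proof -
  assume u: "u \<in> borel_measurable (lebesgue_on S)" "\<And>x. x \<in> S \<Longrightarrow> \<bar>u x\<bar> \<le> B"
  interpret finite_measure "lebesgue_on S" by (rule fm)
  show ?thesis by (rule integrable_const_bound[where B=B]) (use u in auto)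
qed

lemma selfadj:
  fixes B :: real
  assumes u: "u \<in> borel_measurable (lebesgue_on S)" "\<And>x. x \<in> S \<Longrightarrow> \<bar>u x\<bar> \<le> B"
    and v: "integrable (lebesgue_on S) v"
  shows "(LINT x|lebesgue_on S. u x * nlop K S v x) = (LINT x|lebesgue_on S. v x * nlop K S u x)"
proof -
  let ?M = "lebesgue_on S"
  interpret finite_measure ?M by (rule fm)
  interpret P: pair_sigma_finite ?M ?M by intro_locales
  have uint: "integrable ?M u" by (rule intS_bounded[OF u])
  have vm: "v \<in> borel_measurable ?M" using v by measurable
  define F where "F = (\<lambda>x y. u x * (K' x y * v y))"
  have Fm: "case_prod F \<in> borel_measurable (?M \<Otimes>\<^sub>M ?M)"
    using K'_meas2 u vm unfolding F_def by (simp add: case_prod_beta') measurable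
  have Fx: "integrable ?M (F x)" if "x \<in> S" for x
    unfolding F_def using K'int[OF _ v, of x] that S(1) by auto
  have Fint: "integrable (?M \<Otimes>\<^sub>M ?M) (case_prod F)"
  proof (rule P.Fubini_integrable)
    show "case_prod F \<in> borel_measurable (?M \<Otimes>\<^sub>M ?M)" by (rule Fm)
    show "AE x in ?M. integrable ?M (\<lambda>y. case_prod F (x,y))" by (rule AE_I2) (simp add: Fx)
    have nm: "(\<lambda>x. \<integral>y. norm (case_prod F (x, y)) \<partial>?M) \<in> borel_measurable ?M"
    proof -
      have "case_prod (\<lambda>x y. norm (F x y)) \<in> borel_measurable (?M \<Otimes>\<^sub>M ?M)"
        using Fm by (simp add: case_prod_beta') measurable
      then show ?thesis by (simp add: borel_measurable_lebesgue_integral)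
    qed
    show "integrable ?M (\<lambda>x. \<integral>y. norm (case_prod F (x, y)) \<partial>?M)"
    proof (rule integrable_const_bound[where B="B * (C0 * (LINT y|?M. \<bar>v y\<bar>))"])
      show "AE x in ?M. norm (\<integral>y. norm (case_prod F (x, y)) \<partial>?M) \<le> B * (C0 * (LINT y|?M. \<bar>v y\<bar>))"
      proof (rule AE_I2)
        fix x assume x: "x \<in> space ?M"
        have "norm (\<integral>y. norm (case_prod F (x, y)) \<partial>?M) = (\<integral>y. \<bar>F x y\<bar> \<partial>?M)"
          by (simp add: integral_nonneg_AE)
        also have "\<dots> \<le> (\<integral>y. B * (C0 * \<bar>v y\<bar>) \<partial>?M)"
        proof (rule integral_mono)
          show "integrable ?M (\<lambda>y. \<bar>F x y\<bar>)" using Fx x by auto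
          show "integrable ?M (\<lambda>y. B * (C0 * \<bar>v y\<bar>))" using v by auto
          fix y assume y: "y \<in> space ?M"
          have b: "0 \<le> K' x y" "K' x y \<le> C0" using K'bd[of x y] x y S(1) by auto
          have "\<bar>u x\<bar> * (\<bar>K' x y\<bar> * \<bar>v y\<bar>) \<le> B * (C0 * \<bar>v y\<bar>)"
            using u(2)[of x] x b by (intro mult_mono) (auto intro: mult_right_mono)
          then show "\<bar>F x y\<bar> \<le> B * (C0 * \<bar>v y\<bar>)" by (simp add: F_def abs_mult)
        qed
        also have "\<dots> = B * (C0 * (LINT y|?M. \<bar>v y\<bar>))" by simp
        finally show "norm (\<integral>y. norm (case_prod F (x, y)) \<partial>?M) \<le> B * (C0 * (LINT y|?M. \<bar>v y\<bar>))" .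
      qed
    qed (rule nm)
  qed
  have swap: "(\<integral>y. (\<integral>x. F x y \<partial>?M) \<partial>?M) = (\<integral>x. (\<integral>y. F x y \<partial>?M) \<partial>?M)"
    by (rule P.Fubini_integral[OF Fint])
  have lhs: "(LINT x|?M. u x * nlop K S v x) = (\<integral>x. (\<integral>y. F x y \<partial>?M) \<partial>?M)"
  proof (rule Bochner_Integration.integral_cong[OF refl])
    fix x assume x: "x \<in> space ?M"
    then show "u x * nlop K S v x = (\<integral>y. F x y \<partial>?M)"
      using nlop_K'[OF _ vm, of x] S(1) by (auto simp: F_def)
  qed
  have rhs: "(LINT y|?M. v y * nlop K S u y) = (\<integral>y. (\<integral>x. F x y \<partial>?M) \<partial>?M)"
  proof (rule integral_cong_AE)
    show "(\<lambda>y. v y * nlop K S u y) \<in> borel_measurable ?M"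
      using nlop_meas[OF uint] vm by measurable
    have "case_prod (\<lambda>y x. F x y) \<in> borel_measurable (?M \<Otimes>\<^sub>M ?M)"
      using Fm measurable_pair_swap_iff[of "case_prod F" ?M ?M borel] by (simp add: case_prod_beta')
    then show "(\<lambda>y. \<integral>x. F x y \<partial>?M) \<in> borel_measurable ?M"
      by (rule borel_measurable_lebesgue_integral)
    have "AE y in ?M. y \<notin> NN \<and> y \<in> S" using AE_NN AE_space[of ?M] by eventually_elim simp
    then show "AE y in ?M. v y * nlop K S u y = (\<integral>x. F x y \<partial>?M)"
    proof (rule eventually_mono)
      fix y assume y: "y \<notin> NN \<and> y \<in> S"
      have "nlop K S u y = (\<integral>x. K' x y * u x \<partial>?M)"
        unfolding nlop_def
      proof (rule Bochner_Integration.integral_cong[OF refl])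
        fix x assume "x \<in> space ?M"
        then show "K y x * u x = K' x y * u x" using y S(1) Ksym[of y x] by (auto simp: K'_def)
      qed
      moreover have "(\<integral>x. F x y \<partial>?M) = (\<integral>x. v y * (K' x y * u x) \<partial>?M)"
        by (rule Bochner_Integration.integral_cong[OF refl]) (simp add: F_def)
      ultimately show "v y * nlop K S u y = (\<integral>x. F x y \<partial>?M)"
        by simp
    qed
  qed
  show ?thesis using lhs rhs swap by simp
qed

end
end

lemma amgm:
  fixes a b p q :: real
  assumes "0 < p" "0 < q"
  shows "a * b \<le> (1/2) * (a^2 / p * q) + (1/2) * (p * (b^2 / q))"
proof -
  have e: "(1/2) * (a^2 / p * q) + (1/2) * (p * (b^2 / q)) - a * b = (a*q - b*p)^2 / (2*p*q)"
    using assms by (simp add: field_simps power2_eq_square)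
  have "0 \<le> (a*q - b*p)^2 / (2*p*q)" using assms by simp
  then show ?thesis using e by simp
qed

lemma abs_le_sq: "\<bar>t::real\<bar> \<le> 1 + t^2"
proof -
  have "0 \<le> (\<bar>t\<bar> - 1)^2" by simp
  then have "0 \<le> \<bar>t\<bar>^2 - 2*\<bar>t\<bar> + 1" by (simp add: power2_eq_square algebra_simps)
  then show ?thesis by (simp add: power2_abs)
qed

context kern begin

lemma restrict_int:
  fixes T S :: "'n set" and f :: "'n \<Rightarrow> real"
  assumes "T \<subseteq> S" "T \<in> sets lebesgue" "S \<in> sets lebesgue"
  shows "integral\<^sup>L (lebesgue_on T) f = integral\<^sup>L (lebesgue_on S) (\<lambda>y. indicator T y * f y)"
proof -
  have e: "lebesgue_on T = restrict_space (lebesgue_on S) T"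
    using restrict_restrict_space[of S lebesgue T] assms by (simp add: Int_absorb1)
  have "T \<inter> space (lebesgue_on S) \<in> sets (lebesgue_on S)"
    using assms by (simp add: Int_absorb1 sets_restrict_space_iff)
  from integral_restrict_space[OF this, of f] show ?thesis unfolding e by simp
qed

lemma nlop_loc:
  assumes x: "x \<in> \<Omega>" and T: "T \<subseteq> \<Omega>" "T \<in> sets lebesgue" "\<Omega> \<inter> ball x r0 \<subseteq> T"
  shows "nlop K \<Omega> f x = nlop K T f x"
proof -
  have "nlop K T f x = (LINT y|lebesgue_on \<Omega>. indicator T y * (K x y * f y))"
    unfolding nlop_def by (rule restrict_int[OF T(1,2) Om_leb])
  also have "\<dots> = nlop K \<Omega> f x"
    unfolding nlop_def
  proof (rule Bochner_Integration.integral_cong[OF refl])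
    fix y assume y: "y \<in> space (lebesgue_on \<Omega>)"
    show "indicator T y * (K x y * f y) = K x y * f y"
    proof (cases "y \<in> T")
      case False
      then have "dist x y \<ge> r0" using T(3) y by (auto simp: not_less)
      then show ?thesis using Kzero[OF x _ ] y False by auto
    qed simp
  qed
  finally show ?thesis ..
qed

lemma cont_bdd:
  assumes g: "continuous_on (closure \<Omega>) g" and T: "bounded T" "T \<subseteq> \<Omega>"
  shows "\<exists>B. \<forall>x\<in>T. \<bar>g x\<bar> \<le> (B::real)"
proof -
  have c: "compact (closure T)" using T(1) by (simp add: compact_closure)
  have "closure T \<subseteq> closure \<Omega>" using T(2) by (rule closure_mono)
  then have "continuous_on (closure T) g" using g continuous_on_subset by blast
  then have "compact (g ` closure T)" using c compact_continuous_image by blast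
  then have "bounded (g ` closure T)" by (rule compact_imp_bounded)
  then obtain B where "\<forall>y\<in>g ` closure T. norm y \<le> B" unfolding bounded_iff by blast
  then show ?thesis using closure_subset[of T] by (auto intro!: exI[of _ B])
qed

lemma cont_pos_inf:
  assumes g: "continuous_on (closure \<Omega>) g" "\<forall>x\<in>closure \<Omega>. g x > 0" and T: "bounded T" "T \<subseteq> \<Omega>" "T \<noteq> {}"
  shows "\<exists>m>0. \<forall>x\<in>T. g x \<ge> (m::real)"
proof -
  have c: "compact (closure T)" using T(1) by (simp add: compact_closure)
  have sub: "closure T \<subseteq> closure \<Omega>" using T(2) by (rule closure_mono)
  then have "continuous_on (closure T) g" using g continuous_on_subset by blast
  then obtain z where z: "z \<in> closure T" "\<forall>y\<in>closure T. g z \<le> g y"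
    using continuous_attains_inf[OF c] T(3) by auto
  then show ?thesis using g(2) sub closure_subset[of T] by (intro exI[of _ "g z"]) auto
qed

context
  fixes S assumes S: "S \<subseteq> \<Omega>" "S \<in> sets lebesgue" "bounded S"
begin

lemma int_mult_bdd:
  fixes B :: real
  assumes g: "integrable (lebesgue_on S) g" and h: "h \<in> borel_measurable (lebesgue_on S)" "\<And>x. x\<in>S \<Longrightarrow> \<bar>h x\<bar> \<le> B"
  shows "integrable (lebesgue_on S) (\<lambda>x. g x * h x)"
proof (rule Bochner_Integration.integrable_bound[OF integrable_mult_right[OF g, of "\<bar>B\<bar>"]])
  show "(\<lambda>x. g x * h x) \<in> borel_measurable (lebesgue_on S)" using g h by measurable
  show "AE x in lebesgue_on S. norm (g x * h x) \<le> norm (\<bar>B\<bar> * g x)"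
  proof (rule AE_I2)
    fix x assume "x \<in> space (lebesgue_on S)"
    then have "\<bar>h x\<bar> \<le> \<bar>B\<bar>" using h(2)[of x] by auto
    then show "norm (g x * h x) \<le> norm (\<bar>B\<bar> * g x)"
      by (simp add: abs_mult) (metis abs_ge_zero mult.commute mult_left_mono)
  qed
qed

lemma L2int:
  fixes \<psi> :: "'n \<Rightarrow> real"
  assumes "\<psi> \<in> borel_measurable (lebesgue_on S)" "integrable (lebesgue_on S) (\<lambda>x. (\<psi> x)\<^sup>2)"
  shows "integrable (lebesgue_on S) \<psi>"
proof -
  interpret finite_measure "lebesgue_on S" by (rule fm[OF S])
  show ?thesis
  proof (rule Bochner_Integration.integrable_bound[OF Bochner_Integration.integrable_add[OF integrable_const[of 1] assms(2)]])
    show "\<psi> \<in> borel_measurable (lebesgue_on S)" by fact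
    show "AE x in lebesgue_on S. norm (\<psi> x) \<le> norm (1 + (\<psi> x)\<^sup>2)"
      by (rule AE_I2) (use abs_le_sq in auto)
  qed
qed

end
end

context kern begin

lemma dir1:
  fixes a h :: "'n \<Rightarrow> real" and l r :: real
  assumes a: "continuous_on (closure \<Omega>) a"
    and hc: "continuous_on (closure \<Omega>) h" and hp: "\<forall>x\<in>closure \<Omega>. h x > 0"
    and he: "\<forall>x\<in>\<Omega>. nlop K \<Omega> h x + a x * h x + l * h x \<le> 0"
  shows "ereal l \<le> lambda_v K a (\<Omega> \<inter> ball 0 r)"
proof -
  define D where "D = \<Omega> \<inter> ball 0 r"
  have Dsub: "D \<subseteq> \<Omega>" and Dleb: "D \<in> sets lebesgue" and Dbd: "bounded D"
    using opn by (auto simp: D_def borel_open)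
  let ?M = "lebesgue_on D"
  interpret finite_measure ?M by (rule fm[OF Dsub Dleb Dbd])
  define E where "E = \<Omega> \<inter> ball 0 (r + r0)"
  have Esub: "E \<subseteq> \<Omega>" and Eleb: "E \<in> sets lebesgue" and Ebd: "bounded E" and DE: "D \<subseteq> E"
    using opn r0 by (auto simp: D_def E_def borel_open)
  have DsE: "D \<in> sets (lebesgue_on E)" using DE Dleb Eleb by (simp add: sets_restrict_space_iff)
  have clO: "closure \<Omega> \<supseteq> \<Omega>" by (rule closure_subset)
  show ?thesis unfolding lambda_v_def D_def[symmetric]
  proof (rule Inf_greatest)
    fix z assume "z \<in> ereal ` {- (LINT x|lebesgue_on D. (nlop K D \<phi> x + a x * \<phi> x) * \<phi> x)
                                    / (LINT x|lebesgue_on D. (\<phi> x)\<^sup>2) | \<phi>.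
        L2 (lebesgue_on D) \<phi> \<and> \<not> (AE x in lebesgue_on D. \<phi> x = 0)}"
    then obtain \<psi> where z: "z = ereal (- (LINT x|?M. (nlop K D \<psi> x + a x * \<psi> x) * \<psi> x) / (LINT x|?M. (\<psi> x)\<^sup>2))"
      and L2: "L2 ?M \<psi>" and nz: "\<not> (AE x in ?M. \<psi> x = 0)" by blast
    have Dne: "D \<noteq> {}"
    proof
      assume "D = {}"
      then have "AE x in ?M. \<psi> x = 0" by (intro AE_I2) simp
      then show False using nz by simp
    qed
    have \<psi>m: "\<psi> \<in> borel_measurable ?M" and \<psi>2: "integrable ?M (\<lambda>x. (\<psi> x)\<^sup>2)" using L2 by (auto simp: L2_def)
    have \<psi>i: "integrable ?M \<psi>" by (rule L2int[OF Dsub Dleb Dbd \<psi>m \<psi>2])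
    obtain m where m: "m > 0" "\<And>x. x \<in> D \<Longrightarrow> h x \<ge> m"
      using cont_pos_inf[OF hc hp Dbd Dsub Dne] by auto
    obtain Bh where Bh: "\<And>x. x \<in> E \<Longrightarrow> \<bar>h x\<bar> \<le> Bh" using cont_bdd[OF hc Ebd Esub] by auto
    obtain Ba where Ba: "\<And>x. x \<in> D \<Longrightarrow> \<bar>a x\<bar> \<le> Ba" using cont_bdd[OF a Dbd Dsub] by auto
    have hmE: "h \<in> borel_measurable (lebesgue_on E)"
      by (rule continuous_imp_measurable_on_sets_lebesgue[OF continuous_on_subset[OF hc] Eleb]) (use Esub clO in auto)
    have hm: "h \<in> borel_measurable ?M"
      by (rule continuous_imp_measurable_on_sets_lebesgue[OF continuous_on_subset[OF hc] Dleb]) (use Dsub clO in auto)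
    have am: "a \<in> borel_measurable ?M"
      by (rule continuous_imp_measurable_on_sets_lebesgue[OF continuous_on_subset[OF a] Dleb]) (use Dsub clO in auto)
    have hiE: "integrable (lebesgue_on E) h" by (rule intS_bounded[OF Esub Eleb Ebd hmE Bh])
    have hi: "integrable ?M h" by (rule intS_bounded[OF Dsub Dleb Dbd hm]) (use Bh DE in auto)
    have hpos: "x \<in> E \<Longrightarrow> h x > 0" for x using hp Esub clO by auto
    define w where "w x = (\<psi> x)\<^sup>2 / h x" for x
    have wm: "w \<in> borel_measurable ?M" unfolding w_def using \<psi>m hm by measurable
    have wi: "integrable ?M w"
    proof (rule Bochner_Integration.integrable_bound[OF integrable_mult_right[OF \<psi>2, of "1/m"] wm])
      show "AE x in ?M. norm (w x) \<le> norm (1 / m * (\<psi> x)\<^sup>2)"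
      proof (rule AE_I2)
        fix x assume x: "x \<in> space ?M"
        have "h x \<ge> m" using m x by auto
        then have "(\<psi> x)\<^sup>2 / h x \<le> (\<psi> x)\<^sup>2 / m" using m by (intro divide_left_mono) auto
        then show "norm (w x) \<le> norm (1 / m * (\<psi> x)\<^sup>2)" using m \<open>h x \<ge> m\<close> by (simp add: w_def)
      qed
    qed
    have wpos: "x \<in> D \<Longrightarrow> w x \<ge> 0" for x using hpos[of x] DE by (auto simp: w_def)
    have nlbd: "\<And>f x. integrable ?M f \<Longrightarrow> x \<in> D \<Longrightarrow> \<bar>nlop K D f x\<bar> \<le> C0 * (LINT y|?M. \<bar>f y\<bar>)"
      using nlop_bd[OF Dsub Dleb Dbd] Dsub by auto
    have nlm: "\<And>f. integrable ?M f \<Longrightarrow> nlop K D f \<in> borel_measurable ?M"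
      using nlop_meas[OF Dsub Dleb Dbd] by auto
    have i1: "integrable ?M (\<lambda>x. \<psi> x * nlop K D \<psi> x)"
      by (rule int_mult_bdd[OF Dsub Dleb Dbd \<psi>i nlm[OF \<psi>i] nlbd[OF \<psi>i]])
    have i2: "integrable ?M (\<lambda>x. w x * nlop K D h x)"
      by (rule int_mult_bdd[OF Dsub Dleb Dbd wi nlm[OF hi] nlbd[OF hi]])
    have i3: "integrable ?M (\<lambda>x. h x * nlop K D w x)"
      by (rule int_mult_bdd[OF Dsub Dleb Dbd hi nlm[OF wi] nlbd[OF wi]])
    have i4: "integrable ?M (\<lambda>x. - (a x + l) * (\<psi> x)\<^sup>2)"
    proof -
      have hb: "\<bar>- (a x + l)\<bar> \<le> Ba + \<bar>l\<bar>" if "x \<in> D" for x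
        using Ba[OF that] by linarith
      have "integrable ?M (\<lambda>x. (\<psi> x)\<^sup>2 * (- (a x + l)))"
        by (rule int_mult_bdd[OF Dsub Dleb Dbd \<psi>2 _ hb]) (use am in simp)
      then show ?thesis by (simp add: mult.commute)
    qed
    have i5: "integrable ?M (\<lambda>x. a x * (\<psi> x)\<^sup>2)"
    proof -
      have "integrable ?M (\<lambda>x. (\<psi> x)\<^sup>2 * a x)"
        by (rule int_mult_bdd[OF Dsub Dleb Dbd \<psi>2 am Ba])
      then show ?thesis by (simp add: mult.commute)
    qed
    have Lh: "nlop K D h x \<le> - (a x + l) * h x" if x: "x \<in> D" for x
    proof -
      have xO: "x \<in> \<Omega>" using x Dsub by auto
      have "\<Omega> \<inter> ball x r0 \<subseteq> E"
      proof
        fix y assume y: "y \<in> \<Omega> \<inter> ball x r0"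
        have "norm y \<le> norm x + dist x y" by (metis dist_commute dist_norm norm_triangle_sub)
        then have "norm y < r + r0" using x y by (auto simp: D_def)
        then show "y \<in> E" using y by (auto simp: E_def)
      qed
      then have eq: "nlop K \<Omega> h x = nlop K E h x" by (rule nlop_loc[OF xO Esub Eleb])
      have kiE: "integrable (lebesgue_on E) (\<lambda>y. K x y * h y)" by (rule Kint[OF Esub Eleb Ebd xO hiE])
      have "nlop K D h x = (LINT y|lebesgue_on E. indicator D y * (K x y * h y))"
        unfolding nlop_def by (rule restrict_int[OF DE Dleb Eleb])
      also have "\<dots> \<le> nlop K E h x"
        unfolding nlop_def
      proof (rule integral_mono)
        have "integrable (lebesgue_on E) (\<lambda>y. (K x y * h y) * indicator D y)"
          by (rule int_mult_bdd[OF Esub Eleb Ebd kiE, of _ 1]) (auto intro!: borel_measurable_indicator DsE)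
        then show "integrable (lebesgue_on E) (\<lambda>y. indicator D y * (K x y * h y))" by (simp add: mult.commute)
        show "integrable (lebesgue_on E) (\<lambda>y. K x y * h y)" by (rule kiE)
        fix y assume y: "y \<in> space (lebesgue_on E)"
        have "0 \<le> K x y * h y" using Knn[OF xO, of y] hpos[of y] y Esub by auto
        then show "indicator D y * (K x y * h y) \<le> K x y * h y" by (auto simp: indicator_def)
      qed
      also have "\<dots> = nlop K \<Omega> h x" using eq by simp
      also have "\<dots> \<le> - (a x + l) * h x" using he xO by (auto simp: algebra_simps)
      finally show ?thesis .
    qed
    have pic: "\<psi> x * nlop K D \<psi> x \<le> 1/2 * (w x * nlop K D h x) + 1/2 * (h x * nlop K D w x)" if x: "x \<in> D" for x
    proof -
      have xO: "x \<in> \<Omega>" using x Dsub by auto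
      have k\<psi>: "integrable ?M (\<lambda>y. K x y * \<psi> y)" by (rule Kint[OF Dsub Dleb Dbd xO \<psi>i])
      have kh: "integrable ?M (\<lambda>y. K x y * h y)" by (rule Kint[OF Dsub Dleb Dbd xO hi])
      have kw: "integrable ?M (\<lambda>y. K x y * w y)" by (rule Kint[OF Dsub Dleb Dbd xO wi])
      have "\<psi> x * nlop K D \<psi> x = (\<integral>y. \<psi> x * (K x y * \<psi> y) \<partial>?M)" by (simp add: nlop_def)
      also have "\<dots> \<le> (\<integral>y. 1/2 * w x * (K x y * h y) + 1/2 * h x * (K x y * w y) \<partial>?M)"
      proof (rule integral_mono)
        show "integrable ?M (\<lambda>y. \<psi> x * (K x y * \<psi> y))" using k\<psi> by auto
        show "integrable ?M (\<lambda>y. 1/2 * w x * (K x y * h y) + 1/2 * h x * (K x y * w y))"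
          using kh kw by auto
        fix y assume y: "y \<in> space ?M"
        have hx: "h x > 0" and hy: "h y > 0" using hpos x y DE by auto
        have kn: "K x y \<ge> 0" using Knn[OF xO, of y] y Dsub by auto
        have "K x y * (\<psi> x * \<psi> y) \<le> K x y * (1/2 * ((\<psi> x)\<^sup>2 / h x * h y) + 1/2 * (h x * ((\<psi> y)\<^sup>2 / h y)))"
          by (rule mult_left_mono[OF amgm[OF hx hy] kn])
        then show "\<psi> x * (K x y * \<psi> y) \<le> 1/2 * w x * (K x y * h y) + 1/2 * h x * (K x y * w y)"
          by (simp add: w_def algebra_simps)
      qed
      also have "\<dots> = 1/2 * (w x * nlop K D h x) + 1/2 * (h x * nlop K D w x)"
        using kh kw by (simp add: nlop_def)
      finally show ?thesis .
    qed
    have I1: "(LINT x|?M. \<psi> x * nlop K D \<psi> x) \<le> (LINT x|?M. - (a x + l) * (\<psi> x)\<^sup>2)"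
    proof -
      have "(LINT x|?M. \<psi> x * nlop K D \<psi> x) \<le> (LINT x|?M. 1/2 * (w x * nlop K D h x) + 1/2 * (h x * nlop K D w x))"
        by (rule integral_mono) (use i1 i2 i3 pic in auto)
      also have "\<dots> = 1/2 * (LINT x|?M. w x * nlop K D h x) + 1/2 * (LINT x|?M. h x * nlop K D w x)"
        using i2 i3 by simp
      also have "(LINT x|?M. h x * nlop K D w x) = (LINT x|?M. w x * nlop K D h x)"
        by (rule selfadj[OF Dsub Dleb Dbd hm _ wi]) (use Bh DE in auto)
      also have "1/2 * (LINT x|?M. w x * nlop K D h x) + 1/2 * (LINT x|?M. w x * nlop K D h x)
           = (LINT x|?M. w x * nlop K D h x)" by simp
      also have "\<dots> \<le> (LINT x|?M. - (a x + l) * (\<psi> x)\<^sup>2)"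
      proof (rule integral_mono[OF i2 i4])
        fix x assume x: "x \<in> space ?M"
        have hx: "h x > 0" using hpos x DE by auto
        have "w x * nlop K D h x \<le> w x * (- (a x + l) * h x)"
          using Lh[of x] wpos[of x] x by (auto intro: mult_left_mono)
        also have "\<dots> = - (a x + l) * (\<psi> x)\<^sup>2" using hx by (simp add: w_def)
        finally show "w x * nlop K D h x \<le> - (a x + l) * (\<psi> x)\<^sup>2" .
      qed
      finally show ?thesis .
    qed
    define Q where "Q = (LINT x|?M. (\<psi> x)\<^sup>2)"
    have Qpos: "Q > 0"
    proof -
      have "Q \<ge> 0" unfolding Q_def by simp
      moreover have "Q \<noteq> 0"
      proof
        assume "Q = 0"
        then have "AE x in ?M. (\<psi> x)\<^sup>2 = 0"
          using integral_nonneg_eq_0_iff_AE[OF \<psi>2] unfolding Q_def by simp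
        then have "AE x in ?M. \<psi> x = 0" by simp
        then show False using nz by simp
      qed
      ultimately show ?thesis by simp
    qed
    have num: "(LINT x|?M. (nlop K D \<psi> x + a x * \<psi> x) * \<psi> x) = (LINT x|?M. \<psi> x * nlop K D \<psi> x) + (LINT x|?M. a x * (\<psi> x)\<^sup>2)"
    proof -
      have "(LINT x|?M. (nlop K D \<psi> x + a x * \<psi> x) * \<psi> x) = (LINT x|?M. \<psi> x * nlop K D \<psi> x + a x * (\<psi> x)\<^sup>2)"
        by (rule Bochner_Integration.integral_cong[OF refl]) (simp add: algebra_simps power2_eq_square)
      also have "\<dots> = (LINT x|?M. \<psi> x * nlop K D \<psi> x) + (LINT x|?M. a x * (\<psi> x)\<^sup>2)"
        by (rule Bochner_Integration.integral_add[OF i1 i5])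
      finally show ?thesis .
    qed
    have rhs: "(LINT x|?M. - (a x + l) * (\<psi> x)\<^sup>2) = - (LINT x|?M. a x * (\<psi> x)\<^sup>2) - l * Q"
    proof -
      have "(LINT x|?M. - (a x + l) * (\<psi> x)\<^sup>2) = (LINT x|?M. - (a x * (\<psi> x)\<^sup>2) - l * (\<psi> x)\<^sup>2)"
        by (rule Bochner_Integration.integral_cong[OF refl]) (simp add: algebra_simps)
      also have "\<dots> = (LINT x|?M. - (a x * (\<psi> x)\<^sup>2)) - (LINT x|?M. l * (\<psi> x)\<^sup>2)"
        by (rule Bochner_Integration.integral_diff) (use i5 \<psi>2 in auto)
      also have "\<dots> = - (LINT x|?M. a x * (\<psi> x)\<^sup>2) - l * Q" by (simp add: Q_def)
      finally show ?thesis .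
    qed
    have "l * Q \<le> - (LINT x|?M. (nlop K D \<psi> x + a x * \<psi> x) * \<psi> x)"
      using I1 num rhs by simp
    then have "l \<le> - (LINT x|?M. (nlop K D \<psi> x + a x * \<psi> x) * \<psi> x) / Q"
      by (rule pos_le_divide_eq[THEN iffD2, OF Qpos])
    then show "ereal l \<le> z" unfolding z Q_def by simp
  qed
qed

end

lemma ball_notnull:
  fixes c :: "'a::euclidean_space"
  assumes "r > 0" shows "ball c r \<notin> null_sets lebesgue"
proof
  assume "ball c r \<in> null_sets lebesgue"
  then have "measure lebesgue (ball c r) = 0" by (simp add: measure_def null_setsD1)
  moreover have "measure lebesgue (ball c r) = measure lborel (ball c r)" by simp
  ultimately show False using content_ball_pos[OF assms, of c] by simp
qed

lemma cont_AE:
  fixes g :: "'a::euclidean_space \<Rightarrow> real"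
  assumes U: "open U" and g: "continuous_on U g" and ae: "AE x in lebesgue_on U. \<bar>g x\<bar> \<le> B"
    and x: "x \<in> U"
  shows "\<bar>g x\<bar> \<le> B"
proof (rule ccontr)
  assume nx: "\<not> \<bar>g x\<bar> \<le> B"
  have op: "open {y::real. B < \<bar>y\<bar>}" by (rule open_Collect_less) (auto intro!: continuous_intros)
  have "open (g -` {y. B < \<bar>y\<bar>} \<inter> U)"
    using continuous_on_open_vimage[OF U, THEN iffD1, OF g, rule_format, OF op] .
  moreover have "x \<in> g -` {y. B < \<bar>y\<bar>} \<inter> U" using nx x by simp
  ultimately obtain d where d: "d > 0" "ball x d \<subseteq> g -` {y. B < \<bar>y\<bar>} \<inter> U"
    using open_contains_ball_eq by blast
  have s: "U \<inter> space lebesgue \<in> sets lebesgue" using U by (simp add: borel_open)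
  have "AE x in lebesgue. x \<in> U \<longrightarrow> \<bar>g x\<bar> \<le> B" using ae unfolding AE_restrict_space_iff[OF s] .
  then obtain N where N: "{x \<in> space lebesgue. \<not> (x \<in> U \<longrightarrow> \<bar>g x\<bar> \<le> B)} \<subseteq> N" "N \<in> null_sets lebesgue"
  proof (rule AE_E)
    fix N assume "{x \<in> space lebesgue. \<not> (x \<in> U \<longrightarrow> \<bar>g x\<bar> \<le> B)} \<subseteq> N"
      "emeasure lebesgue N = 0" "N \<in> sets lebesgue"
    then show thesis by (intro that null_setsI)
  qed
  have "ball x d \<subseteq> N"
  proof
    fix z assume "z \<in> ball x d"
    then have "z \<in> g -` {y. B < \<bar>y\<bar>} \<inter> U" using d(2) by blast
    then have "z \<in> U" "\<not> \<bar>g z\<bar> \<le> B" by auto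
    then have "z \<in> {x \<in> space lebesgue. \<not> (x \<in> U \<longrightarrow> \<bar>g x\<bar> \<le> B)}" by simp
    then show "z \<in> N" using N(1) by (rule subsetD[rotated])
  qed
  moreover have "ball x d \<in> sets lebesgue" by (simp add: borel_open)
  ultimately have "ball x d \<in> null_sets lebesgue" using null_sets_subset[OF N(2)] by blast
  then show False using ball_notnull[OF d(1), of x] by simp
qed

context kern begin

definition "bm S f \<longleftrightarrow> f \<in> borel_measurable (lebesgue_on S) \<and> (\<exists>B. \<forall>x\<in>S. \<bar>f x\<bar> \<le> (B::real))"

lemma bm_mult: "bm S f \<Longrightarrow> bm S g \<Longrightarrow> bm S (\<lambda>x. f x * g x)"
proof -
  assume f: "bm S f" and g: "bm S g"
  then obtain B1 B2 where b: "\<forall>x\<in>S. \<bar>f x\<bar> \<le> B1" "\<forall>x\<in>S. \<bar>g x\<bar> \<le> B2" by (auto simp: bm_def)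
  have "\<forall>x\<in>S. \<bar>f x * g x\<bar> \<le> B1 * B2"
    using b by (auto simp: abs_mult intro!: mult_mono)
  then show ?thesis using f g by (auto simp: bm_def)
qed

lemma bm_add: "bm S f \<Longrightarrow> bm S g \<Longrightarrow> bm S (\<lambda>x. f x + g x)"
proof -
  assume f: "bm S f" and g: "bm S g"
  then obtain B1 B2 where b: "\<forall>x\<in>S. \<bar>f x\<bar> \<le> B1" "\<forall>x\<in>S. \<bar>g x\<bar> \<le> B2" by (auto simp: bm_def)
  have "\<forall>x\<in>S. \<bar>f x + g x\<bar> \<le> B1 + B2"
  proof
    fix x assume "x \<in> S"
    then have "\<bar>f x\<bar> \<le> B1" "\<bar>g x\<bar> \<le> B2" using b by auto
    then show "\<bar>f x + g x\<bar> \<le> B1 + B2" by (smt (verit) abs_triangle_ineq)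
  qed
  then show ?thesis using f g by (auto simp: bm_def)
qed

lemma bm_minus: "bm S f \<Longrightarrow> bm S (\<lambda>x. - f x)"
  by (auto simp: bm_def)

lemma bm_diff: "bm S f \<Longrightarrow> bm S g \<Longrightarrow> bm S (\<lambda>x. f x - g x)"
  using bm_add[of S f "\<lambda>x. - g x"] bm_minus[of S g] by simp

lemma bm_const: "bm S (\<lambda>x. c)"
  by (auto simp: bm_def)

lemma bm_ind: "A \<in> sets lebesgue \<Longrightarrow> bm S (indicator A)"
proof -
  assume A: "A \<in> sets lebesgue"
  have "indicator A \<in> borel_measurable lebesgue" using A by (rule borel_measurable_indicator)
  then have "indicator A \<in> borel_measurable (lebesgue_on S)" by (rule measurable_restrict_space1)
  moreover have "\<forall>x\<in>S. \<bar>indicator A x :: real\<bar> \<le> 1" by (simp add: indicator_def)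
  ultimately show ?thesis unfolding bm_def by blast
qed

lemma bm_restr: "bm S f \<Longrightarrow> T \<subseteq> S \<Longrightarrow> bm T f"
  unfolding bm_def by (auto intro: measurable_restrict_mono)

lemma bm_cont: "continuous_on (closure \<Omega>) g \<Longrightarrow> bounded S \<Longrightarrow> S \<subseteq> \<Omega> \<Longrightarrow> S \<in> sets lebesgue \<Longrightarrow> bm S g"
proof -
  assume g: "continuous_on (closure \<Omega>) g" and S: "bounded S" "S \<subseteq> \<Omega>" "S \<in> sets lebesgue"
  have "continuous_on S g" using continuous_on_subset[OF g] S(2) closure_subset[of \<Omega>] by blast
  then have "g \<in> borel_measurable (lebesgue_on S)" using S(3) by (rule continuous_imp_measurable_on_sets_lebesgue)
  then show ?thesis unfolding bm_def using cont_bdd[OF g S(1,2)] by blast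
qed

lemma bm_contO: "continuous_on \<Omega> g \<Longrightarrow> \<forall>x\<in>\<Omega>. \<bar>g x\<bar> \<le> B \<Longrightarrow> S \<subseteq> \<Omega> \<Longrightarrow> S \<in> sets lebesgue \<Longrightarrow> bm S g"
proof -
  assume g: "continuous_on \<Omega> g" "\<forall>x\<in>\<Omega>. \<bar>g x\<bar> \<le> B" and S: "S \<subseteq> \<Omega>" "S \<in> sets lebesgue"
  have "continuous_on S g" using continuous_on_subset[OF g(1) S(1)] .
  then have "g \<in> borel_measurable (lebesgue_on S)" using S(2) by (rule continuous_imp_measurable_on_sets_lebesgue)
  moreover have "\<forall>x\<in>S. \<bar>g x\<bar> \<le> B" using g(2) S(1) by blast
  ultimately show ?thesis unfolding bm_def by blast
qed

context
  fixes S assumes S: "S \<subseteq> \<Omega>" "S \<in> sets lebesgue" "bounded S"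
begin

lemma bm_int: "bm S f \<Longrightarrow> integrable (lebesgue_on S) f"
  unfolding bm_def using intS_bounded[OF S] by blast

lemma bm_nlop: "bm S f \<Longrightarrow> bm S (nlop K S f)"
proof -
  assume f: "bm S f"
  have i: "integrable (lebesgue_on S) f" using bm_int[OF f] .
  have "\<forall>x\<in>S. \<bar>nlop K S f x\<bar> \<le> C0 * (LINT y|lebesgue_on S. \<bar>f y\<bar>)"
    using nlop_bd[OF S _ i] S(1) by blast
  then show ?thesis unfolding bm_def
    using nlop_meas[OF S i] by blast
qed

lemma nlop_vol:
  assumes x: "x \<in> \<Omega>" and g: "bm S g" "\<And>y. y \<in> S \<Longrightarrow> 0 \<le> g y \<and> g y \<le> 1"
  shows "nlop K S g x \<le> C0 * measure lborel (ball (0::'n) r0)"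
proof -
  interpret finite_measure "lebesgue_on S" by (rule fm[OF S])
  have bi: "bm S (indicator (ball x r0))" by (rule bm_ind) auto
  have "nlop K S g x \<le> (LINT y|lebesgue_on S. C0 * indicator (ball x r0) y)"
    unfolding nlop_def
  proof (rule integral_mono)
    show "integrable (lebesgue_on S) (\<lambda>y. K x y * g y)" by (rule Kint[OF S x bm_int[OF g(1)]])
    show "integrable (lebesgue_on S) (\<lambda>y. C0 * indicator (ball x r0) y)"
      using bm_int[OF bi] by simp
    fix y assume y: "y \<in> space (lebesgue_on S)"
    then have yO: "y \<in> \<Omega>" using S by auto
    have "K x y * g y \<le> K x y" using g(2)[of y] y Knn[OF x yO] by (auto intro: mult_left_le)
    also have "\<dots> \<le> C0 * indicator (\<Omega> \<inter> ball x r0) y" using Kup[OF x yO] .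
    also have "\<dots> \<le> C0 * indicator (ball x r0) y" using C0 by (auto simp: indicator_def)
    finally show "K x y * g y \<le> C0 * indicator (ball x r0) y" .
  qed
  also have "\<dots> = C0 * measure (lebesgue_on S) (ball x r0 \<inter> S)" by simp
  also have "measure (lebesgue_on S) (ball x r0 \<inter> S) = measure lebesgue (ball x r0 \<inter> S)"
    using S by (intro measure_restrict_space) auto
  also have "\<dots> \<le> measure lebesgue (ball x r0)"
    using S by (intro measure_mono_fmeasurable) auto
  also have "\<dots> = measure lborel (ball (0::'n) r0)" using r0 by (simp add: content_ball)
  finally show ?thesis using C0 by (simp add: mult_left_mono)
qed

end
end

context kern begin

lemma ray:
  fixes a h :: "'n \<Rightarrow> real" and l t Bh :: real
  assumes a: "continuous_on (closure \<Omega>) a"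
    and hc: "continuous_on \<Omega> h" and hB: "\<forall>x\<in>\<Omega>. \<bar>h x\<bar> \<le> Bh" and hnn: "\<forall>x\<in>\<Omega>. h x \<ge> 0"
    and he: "\<forall>x\<in>\<Omega>. nlop K \<Omega> h x + (a x + l) * h x \<ge> 0"
  shows "- (LINT x|lebesgue_on (\<Omega> \<inter> ball 0 t). (nlop K (\<Omega> \<inter> ball 0 t) h x + a x * h x) * h x)
     \<le> l * (LINT x|lebesgue_on (\<Omega> \<inter> ball 0 t). (h x)\<^sup>2)
       + (C0 * measure lborel (ball (0::'n) r0) / 2) *
         ((LINT x|lebesgue_on (\<Omega> \<inter> ball 0 (t + r0)). (h x)\<^sup>2) - (LINT x|lebesgue_on (\<Omega> \<inter> ball 0 (t - r0)). (h x)\<^sup>2))"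
proof -
  define D where "D = \<Omega> \<inter> ball 0 t"
  define E where "E = \<Omega> \<inter> ball 0 (t + r0)"
  define T where "T = \<Omega> \<inter> ball 0 (t - r0)"
  define V where "V = measure lborel (ball (0::'n) r0)"
  have Dsub: "D \<subseteq> \<Omega>" and Dleb: "D \<in> sets lebesgue" and Dbd: "bounded D"
    using opn by (auto simp: D_def borel_open)
  have Esub: "E \<subseteq> \<Omega>" and Eleb: "E \<in> sets lebesgue" and Ebd: "bounded E"
    using opn by (auto simp: E_def borel_open)
  have Tleb: "T \<in> sets lebesgue" using opn by (auto simp: T_def borel_open)
  have DE: "D \<subseteq> E" and TE: "T \<subseteq> E" using r0 by (auto simp: D_def E_def T_def)
  have EDleb: "E - D \<in> sets lebesgue" using Eleb Dleb by auto
  have Fleb: "- ball (0::'n) (t - r0) \<in> sets lebesgue"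
  proof -
    have "closed (- ball (0::'n) (t - r0))" by (intro closed_Compl open_ball)
    then show ?thesis by (simp add: borel_closed)
  qed
  have V0: "V \<ge> 0" unfolding V_def by simp
  let ?D = "lebesgue_on D" and ?E = "lebesgue_on E"
  note bmE = bm_int[OF Esub Eleb Ebd]
  note bmD = bm_int[OF Dsub Dleb Dbd]
  have bhE: "bm E h" by (rule bm_contO[OF hc hB Esub Eleb])
  have bhD: "bm D h" by (rule bm_contO[OF hc hB Dsub Dleb])
  have baD: "bm D a" by (rule bm_cont[OF a Dbd Dsub Dleb])
  have biD: "bm E (indicator D)" by (rule bm_ind[OF Dleb])
  have biED: "bm E (indicator (E - D))" by (rule bm_ind[OF EDleb])
  have biF: "bm E (indicator (- ball (0::'n) (t - r0)))" by (rule bm_ind[OF Fleb])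
  have biT: "bm E (indicator T)" by (rule bm_ind[OF Tleb])
  define v where "v y = indicator (E - D) y * (h y)\<^sup>2" for y
  define G where "G = nlop K E (\<lambda>y. indicator (E - D) y * h y)"
  define P where "P = nlop K E (indicator (E - D))"
  define R where "R = nlop K E v"
  define U where "U = nlop K E (indicator D)"
  have bv: "bm E v" unfolding v_def power2_eq_square by (intro bm_mult biED bhE)
  have bG: "bm E G" unfolding G_def by (intro bm_nlop[OF Esub Eleb Ebd] bm_mult biED bhE)
  have bP: "bm E P" unfolding P_def by (intro bm_nlop[OF Esub Eleb Ebd] biED)
  have bR: "bm E R" unfolding R_def by (intro bm_nlop[OF Esub Eleb Ebd] bv)
  have bU: "bm E U" unfolding U_def by (intro bm_nlop[OF Esub Eleb Ebd] biD)
  have ih: "integrable ?E h" by (rule bmE[OF bhE])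
  have S1: "nlop K D h x + G x = nlop K \<Omega> h x" if x: "x \<in> D" for x
  proof -
    have xO: "x \<in> \<Omega>" using x Dsub by auto
    have "\<Omega> \<inter> ball x r0 \<subseteq> E"
    proof
      fix y assume y: "y \<in> \<Omega> \<inter> ball x r0"
      have "norm y \<le> norm x + dist x y" by (metis dist_commute dist_norm norm_triangle_sub)
      then have "norm y < t + r0" using x y by (auto simp: D_def)
      then show "y \<in> E" using y by (auto simp: E_def)
    qed
    then have eq: "nlop K \<Omega> h x = nlop K E h x" by (rule nlop_loc[OF xO Esub Eleb])
    have k1: "integrable ?E (\<lambda>y. K x y * h y)" by (rule Kint[OF Esub Eleb Ebd xO ih])
    have k1': "integrable ?E (\<lambda>y. indicator D y * (K x y * h y))"
    proof -
      have "integrable ?E (\<lambda>y. (K x y * h y) * indicator D y)"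
        by (rule int_mult_bdd[OF Esub Eleb Ebd k1, of _ 1]) (use biD in \<open>simp add: bm_def\<close>, simp add: indicator_def)
      then show ?thesis by (simp add: mult.commute)
    qed
    have k2: "integrable ?E (\<lambda>y. K x y * (indicator (E - D) y * h y))"
      by (rule Kint[OF Esub Eleb Ebd xO bmE]) (intro bm_mult biED bhE)
    have "nlop K D h x = (LINT y|?E. indicator D y * (K x y * h y))"
      unfolding nlop_def by (rule restrict_int[OF DE Dleb Eleb])
    then have "nlop K D h x + G x = (LINT y|?E. indicator D y * (K x y * h y)) + (LINT y|?E. K x y * (indicator (E - D) y * h y))"
      by (simp add: G_def nlop_def)
    also have "\<dots> = (LINT y|?E. indicator D y * (K x y * h y) + K x y * (indicator (E - D) y * h y))"
      by (rule Bochner_Integration.integral_add[symmetric, OF k1' k2])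
    also have "\<dots> = (LINT y|?E. K x y * h y)"
    proof (rule Bochner_Integration.integral_cong[OF refl])
      fix y assume "y \<in> space ?E"
      then show "indicator D y * (K x y * h y) + K x y * (indicator (E - D) y * h y) = K x y * h y"
        by (auto simp: indicator_def)
    qed
    also have "\<dots> = nlop K \<Omega> h x" using eq by (simp add: nlop_def)
    finally show ?thesis .
  qed

  have hnnE: "x \<in> E \<Longrightarrow> h x \<ge> 0" for x using hnn Esub by auto
  have S2: "- (l * (h x * h x)) - G x * h x \<le> (nlop K D h x + a x * h x) * h x" if x: "x \<in> D" for x
  proof -
    have xO: "x \<in> \<Omega>" using x Dsub by auto
    have h1: "nlop K \<Omega> h x + (a x + l) * h x \<ge> 0" using he xO by auto
    have "- (l * h x) - G x \<le> nlop K D h x + a x * h x"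
      using S1[OF x] h1 unfolding distrib_right by linarith
    then have "(- (l * h x) - G x) * h x \<le> (nlop K D h x + a x * h x) * h x"
      by (rule mult_right_mono) (use hnn xO in auto)
    then show ?thesis by (simp add: algebra_simps)
  qed
  have bGD: "bm D G" by (rule bm_restr[OF bG DE])
  have S3: "- (LINT x|?D. (nlop K D h x + a x * h x) * h x) \<le> l * (LINT x|?D. h x * h x) + (LINT x|?D. G x * h x)"
  proof -
    have i1: "integrable ?D (\<lambda>x. (nlop K D h x + a x * h x) * h x)"
      by (intro bmD bm_mult bm_add bm_nlop[OF Dsub Dleb Dbd] bhD baD)
    have i2: "integrable ?D (\<lambda>x. h x * h x)" by (intro bmD bm_mult bhD)
    have i3: "integrable ?D (\<lambda>x. G x * h x)" by (intro bmD bm_mult bhD bGD)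
    have "(LINT x|?D. - (l * (h x * h x)) - G x * h x) \<le> (LINT x|?D. (nlop K D h x + a x * h x) * h x)"
      by (rule integral_mono[OF _ i1]) (use i2 i3 S2 in auto)
    moreover have "(LINT x|?D. - (l * (h x * h x)) - G x * h x) = - (l * (LINT x|?D. h x * h x)) - (LINT x|?D. G x * h x)"
      using i2 i3 by simp
    ultimately show ?thesis by linarith
  qed
  have S4: "(LINT x|?D. G x * h x) = (LINT x|?E. indicator D x * (G x * h x))"
    by (rule restrict_int[OF DE Dleb Eleb])
  have S5: "indicator D x * (G x * h x) \<le> indicator D x * (1/2 * (h x * h x * P x) + 1/2 * R x)" if x: "x \<in> E" for x
  proof (cases "x \<in> D")
    case False then show ?thesis by simp
  next
    case True
    have xO: "x \<in> \<Omega>" using x Esub by auto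
    have ki1: "integrable ?E (\<lambda>y. K x y * indicator (E - D) y)" by (rule Kint[OF Esub Eleb Ebd xO bmE[OF biED]])
    have ki2: "integrable ?E (\<lambda>y. K x y * v y)" by (rule Kint[OF Esub Eleb Ebd xO bmE[OF bv]])
    have ki3: "integrable ?E (\<lambda>y. K x y * (indicator (E - D) y * h y))"
      by (rule Kint[OF Esub Eleb Ebd xO bmE]) (intro bm_mult biED bhE)
    have e1: "G x * h x = (LINT y|?E. h x * (K x y * (indicator (E - D) y * h y)))"
      by (simp add: G_def nlop_def mult.commute)
    have e2: "1/2 * (h x * h x * P x) + 1/2 * R x
        = (LINT y|?E. 1/2 * (h x * h x) * (K x y * indicator (E - D) y) + 1/2 * (K x y * v y))"
      using ki1 ki2 by (simp add: P_def R_def nlop_def)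
    have "G x * h x \<le> 1/2 * (h x * h x * P x) + 1/2 * R x"
      unfolding e1 e2
    proof (rule integral_mono)
      show "integrable ?E (\<lambda>y. h x * (K x y * (indicator (E - D) y * h y)))" using ki3 by simp
      show "integrable ?E (\<lambda>y. 1/2 * (h x * h x) * (K x y * indicator (E - D) y) + 1/2 * (K x y * v y))"
        using ki1 ki2 by simp
      fix y assume y: "y \<in> space ?E"
      have yO: "y \<in> \<Omega>" using y Esub by auto
      have kn: "0 \<le> K x y * indicator (E - D) y" using Knn[OF xO yO] by simp
      have ab: "h x * h y \<le> 1/2 * (h x * h x) + 1/2 * (h y * h y)"
        using amgm[of 1 1 "h x" "h y"] by (simp add: power2_eq_square)
      have "h x * (K x y * (indicator (E - D) y * h y)) = (K x y * indicator (E - D) y) * (h x * h y)"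
        by (simp add: algebra_simps)
      also have "\<dots> \<le> (K x y * indicator (E - D) y) * (1/2 * (h x * h x) + 1/2 * (h y * h y))"
        by (rule mult_left_mono[OF ab kn])
      also have "\<dots> = 1/2 * (h x * h x) * (K x y * indicator (E - D) y) + 1/2 * (K x y * v y)"
        by (simp add: v_def power2_eq_square algebra_simps)
      finally show "h x * (K x y * (indicator (E - D) y * h y)) \<le> 1/2 * (h x * h x) * (K x y * indicator (E - D) y) + 1/2 * (K x y * v y)" .
    qed
    then show ?thesis using True by simp
  qed
  have iA: "integrable ?E (\<lambda>x. indicator D x * (h x * h x * P x))" by (intro bmE bm_mult biD bhE bP)
  have iB: "integrable ?E (\<lambda>x. indicator D x * R x)" by (intro bmE bm_mult biD bR)
  have S6: "(LINT x|?E. indicator D x * (G x * h x)) \<le> 1/2 * (LINT x|?E. indicator D x * (h x * h x * P x)) + 1/2 * (LINT x|?E. indicator D x * R x)"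
  proof -
    have "(LINT x|?E. indicator D x * (G x * h x)) \<le> (LINT x|?E. indicator D x * (1/2 * (h x * h x * P x) + 1/2 * R x))"
    proof (rule integral_mono)
      show "integrable ?E (\<lambda>x. indicator D x * (G x * h x))" by (intro bmE bm_mult biD bG bhE)
      show "integrable ?E (\<lambda>x. indicator D x * (1/2 * (h x * h x * P x) + 1/2 * R x))"
        by (intro bmE bm_mult bm_add bm_const biD bhE bP bR)
      fix x assume "x \<in> space ?E" then show "indicator D x * (G x * h x) \<le> indicator D x * (1/2 * (h x * h x * P x) + 1/2 * R x)"
        using S5 by simp
    qed
    also have "\<dots> = (LINT x|?E. 1/2 * (indicator D x * (h x * h x * P x)) + 1/2 * (indicator D x * R x))"
      by (rule Bochner_Integration.integral_cong[OF refl]) (simp add: algebra_simps)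
    also have "\<dots> = 1/2 * (LINT x|?E. indicator D x * (h x * h x * P x)) + 1/2 * (LINT x|?E. indicator D x * R x)"
      using iA iB by simp
    finally show ?thesis .
  qed
  have S7: "(LINT x|?E. indicator D x * R x) = (LINT x|?E. v x * U x)"
    unfolding R_def U_def
    by (rule selfadj[OF Esub Eleb Ebd, of _ 1]) (use biD bmE[OF bv] in \<open>simp add: bm_def\<close>, simp add: indicator_def, rule bmE[OF bv])
  have S8: "(LINT x|?E. v x * U x) \<le> C0 * V * (LINT x|?E. v x)"
  proof -
    have "(LINT x|?E. v x * U x) \<le> (LINT x|?E. C0 * V * v x)"
    proof (rule integral_mono)
      show "integrable ?E (\<lambda>x. v x * U x)" by (intro bmE bm_mult bv bU)
      show "integrable ?E (\<lambda>x. C0 * V * v x)" by (intro bmE bm_mult bv bm_const)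
      fix x assume x: "x \<in> space ?E"
      have "U x \<le> C0 * V" unfolding U_def V_def
        by (rule nlop_vol[OF Esub Eleb Ebd]) (use x Esub biD in \<open>auto simp: indicator_def\<close>)
      moreover have "v x \<ge> 0" by (simp add: v_def)
      ultimately have "v x * U x \<le> v x * (C0 * V)" by (intro mult_left_mono)
      then show "v x * U x \<le> C0 * V * v x" by (simp add: mult.commute)
    qed
    then show ?thesis by simp
  qed
  have S9: "(LINT x|?E. indicator D x * (h x * h x * P x)) \<le> C0 * V * (LINT x|?E. indicator D x * indicator (- ball (0::'n) (t - r0)) x * (h x * h x))"
  proof -
    have "(LINT x|?E. indicator D x * (h x * h x * P x)) \<le> (LINT x|?E. C0 * V * (indicator D x * indicator (- ball (0::'n) (t - r0)) x * (h x * h x)))"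
    proof (rule integral_mono[OF iA])
      show "integrable ?E (\<lambda>x. C0 * V * (indicator D x * indicator (- ball (0::'n) (t - r0)) x * (h x * h x)))"
        by (intro bmE bm_mult bm_const biD biF bhE)
      fix x assume x: "x \<in> space ?E"
      have xO: "x \<in> \<Omega>" using x Esub by auto
      have Pb: "P x \<le> C0 * V" unfolding P_def V_def
        by (rule nlop_vol[OF Esub Eleb Ebd xO biED]) (auto simp: indicator_def)
      have P0: "P x = 0" if xD: "x \<in> D" and xb: "x \<in> ball 0 (t - r0)"
      proof -
        have "P x = (LINT y|?E. 0)" unfolding P_def nlop_def
        proof (rule Bochner_Integration.integral_cong[OF refl])
          fix y assume y: "y \<in> space ?E"
          show "K x y * indicator (E - D) y = 0"
          proof (cases "y \<in> D")
            case False
            then have "norm y \<ge> t" using y by (auto simp: D_def E_def)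
            moreover have "norm x < t - r0" using xb by simp
            moreover have "norm y \<le> norm x + dist x y" by (metis dist_commute dist_norm norm_triangle_sub)
            ultimately have "dist x y \<ge> r0" by linarith
            then show ?thesis using Kzero[OF xO, of y] y Esub by auto
          qed simp
        qed
        then show ?thesis by simp
      qed
      show "indicator D x * (h x * h x * P x) \<le> C0 * V * (indicator D x * indicator (- ball (0::'n) (t - r0)) x * (h x * h x))"
      proof (cases "x \<in> D \<and> x \<notin> ball 0 (t - r0)")
        case True
        have "h x * h x * P x \<le> h x * h x * (C0 * V)" by (rule mult_left_mono[OF Pb]) simp
        then show ?thesis using True by (simp add: mult.commute mult.left_commute)
      next
        case False
        then show ?thesis using P0 by (auto simp: indicator_def)
      qed
    qed
    then show ?thesis by simp
  qed
  have S10: "(LINT x|?E. indicator D x * indicator (- ball (0::'n) (t - r0)) x * (h x * h x)) + (LINT x|?E. v x)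
      \<le> (LINT x|?E. h x * h x) - (LINT x|?E. indicator T x * (h x * h x))"
  proof -
    have "(LINT x|?E. indicator D x * indicator (- ball (0::'n) (t - r0)) x * (h x * h x) + v x)
        \<le> (LINT x|?E. h x * h x - indicator T x * (h x * h x))"
    proof (rule integral_mono)
      show "integrable ?E (\<lambda>x. indicator D x * indicator (- ball (0::'n) (t - r0)) x * (h x * h x) + v x)"
        by (intro bmE bm_add bm_mult biD biF bhE bv)
      show "integrable ?E (\<lambda>x. h x * h x - indicator T x * (h x * h x))"
        by (intro bmE bm_diff bm_mult biT bhE)
      fix x assume x: "x \<in> space ?E"
      have xO: "x \<in> \<Omega>" using x Esub by auto
      show "indicator D x * indicator (- ball (0::'n) (t - r0)) x * (h x * h x) + v x \<le> h x * h x - indicator T x * (h x * h x)"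
      proof (cases "x \<in> D")
        case True
        then show ?thesis using xO by (auto simp: v_def indicator_def T_def)
      next
        case False
        then have "x \<notin> T" using r0 by (auto simp: D_def T_def)
        then show ?thesis using False x by (auto simp: v_def indicator_def power2_eq_square)
      qed
    qed
    moreover have "(LINT x|?E. indicator D x * indicator (- ball (0::'n) (t - r0)) x * (h x * h x) + v x)
        = (LINT x|?E. indicator D x * indicator (- ball (0::'n) (t - r0)) x * (h x * h x)) + (LINT x|?E. v x)"
      by (intro Bochner_Integration.integral_add bmE bm_mult biD biF bhE bv)
    moreover have "(LINT x|?E. h x * h x - indicator T x * (h x * h x)) = (LINT x|?E. h x * h x) - (LINT x|?E. indicator T x * (h x * h x))"
      by (intro Bochner_Integration.integral_diff bmE bm_mult biT bhE)
    ultimately show ?thesis by simp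
  qed
  have mT: "(LINT x|?E. indicator T x * (h x * h x)) = (LINT x|lebesgue_on T. h x * h x)"
    by (rule restrict_int[OF TE Tleb Eleb, symmetric])
  have CV: "C0 * V \<ge> 0" using C0 V0 by simp
  have "- (LINT x|?D. (nlop K D h x + a x * h x) * h x)
      \<le> l * (LINT x|?D. h x * h x) + C0 * V / 2 * ((LINT x|?E. h x * h x) - (LINT x|lebesgue_on T. h x * h x))"
  proof -
    have "(LINT x|?E. indicator D x * indicator (- ball (0::'n) (t - r0)) x * (h x * h x)) + (LINT x|?E. v x)
      \<le> (LINT x|?E. h x * h x) - (LINT x|lebesgue_on T. h x * h x)" using S10 mT by simp
    then have "C0 * V * ((LINT x|?E. indicator D x * indicator (- ball (0::'n) (t - r0)) x * (h x * h x)) + (LINT x|?E. v x))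
      \<le> C0 * V * ((LINT x|?E. h x * h x) - (LINT x|lebesgue_on T. h x * h x))"
      by (rule mult_left_mono[OF _ CV])
    then show ?thesis using S3 S4 S6 S7 S8 S9 by (simp add: algebra_simps)
  qed
  then show ?thesis by (simp add: D_def[symmetric] E_def[symmetric] T_def[symmetric] V_def[symmetric] power2_eq_square)
qed

end

lemma growth:
  fixes m :: "real \<Rightarrow> real" and q C :: real and Nz k d :: nat
  assumes mono: "\<And>s s'. s \<le> s' \<Longrightarrow> m s \<le> m s'"
    and step: "\<And>n::nat. n \<ge> Nz \<Longrightarrow> m (real n + real k) \<ge> q * m (real n - real k)"
    and q: "q > 1" and pos: "m (real Nz) > 0" and k: "k \<ge> 1"
    and ub: "\<And>s. s \<ge> 0 \<Longrightarrow> m s \<le> C * s ^ d"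
  shows False
proof -
  define f where "f j = m (real Nz + 2 * real k * real j)" for j :: nat
  have fs: "f (Suc j) \<ge> q * f j" for j
  proof -
    have st: "m (real (Nz + k + 2*k*j) + real k) \<ge> q * m (real (Nz + k + 2*k*j) - real k)"
      by (rule step) simp
    have e1: "real (Nz + k + 2*k*j) + real k = real Nz + 2 * real k * real (Suc j)"
      by (simp add: algebra_simps)
    have e2: "real (Nz + k + 2*k*j) - real k = real Nz + 2 * real k * real j"
      by (simp add: algebra_simps)
    show ?thesis unfolding f_def using st unfolding e1 e2 .
  qed
  have fq: "f j \<ge> q ^ j * f 0" for j
  proof (induction j)
    case 0 then show ?case by simp
  next
    case (Suc j)
    have "q ^ Suc j * f 0 = q * (q ^ j * f 0)" by simp
    also have "\<dots> \<le> q * f j" using Suc q by (intro mult_left_mono) auto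
    also have "\<dots> \<le> f (Suc j)" by (rule fs)
    finally show ?case .
  qed
  have f0: "f 0 > 0" using pos by (simp add: f_def)
  have le: "f 0 \<le> C * ((real Nz + 2 * real k * real j) ^ d / q ^ j)" for j
  proof -
    have "q ^ j * f 0 \<le> C * (real Nz + 2 * real k * real j) ^ d"
      using fq[of j] ub[of "real Nz + 2 * real k * real j"] by (simp add: f_def)
    moreover have "q ^ j > 0" using q by simp
    ultimately show ?thesis by (simp add: field_simps)
  qed
  have kpos: "2 * real k > 0" using k by simp
  have "((\<lambda>j::nat. (real Nz + 2 * real k * real j) ^ d / q ^ j) \<longlongrightarrow> 0) sequentially"
    using q kpos by real_asymp
  then have "((\<lambda>j::nat. C * ((real Nz + 2 * real k * real j) ^ d / q ^ j)) \<longlongrightarrow> 0) sequentially"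
    by (rule tendsto_mult_right_zero)
  then have "f 0 \<le> 0" by (rule LIMSEQ_le_const) (use le in auto)
  then show False using f0 by simp
qed

context kern begin

lemma dir2:
  fixes a h :: "'n \<Rightarrow> real" and l \<epsilon> :: real
  assumes a: "continuous_on (closure \<Omega>) a"
    and hc: "continuous_on \<Omega> h" and hL: "Linfty (lebesgue_on \<Omega>) h" and hnn: "\<forall>x\<in>\<Omega>. h x \<ge> 0"
    and hnz: "\<exists>x\<in>\<Omega>. h x \<noteq> 0" and he: "\<forall>x\<in>\<Omega>. nlop K \<Omega> h x + (a x + l) * h x \<ge> 0"
    and \<epsilon>: "\<epsilon> > 0"
  shows "\<forall>N. \<exists>n\<ge>N. lambda_v K a (\<Omega> \<inter> ball 0 (real n)) \<le> ereal (l + \<epsilon>)"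
proof (rule ccontr)
  assume "\<not> ?thesis"
  then obtain N0 where N0': "\<forall>n\<ge>N0. \<not> lambda_v K a (\<Omega> \<inter> ball 0 (real n)) \<le> ereal (l + \<epsilon>)"
    by blast
  have N0: "ereal (l + \<epsilon>) < lambda_v K a (\<Omega> \<inter> ball 0 (real n))" if "n \<ge> N0" for n
    using N0' that by (simp add: not_le)
  obtain Bh where hB: "\<forall>x\<in>\<Omega>. \<bar>h x\<bar> \<le> Bh"
  proof -
    from hL obtain B where "AE x in lebesgue_on \<Omega>. \<bar>h x\<bar> \<le> B" by (auto simp: Linfty_def)
    then have "\<forall>x\<in>\<Omega>. \<bar>h x\<bar> \<le> B" using cont_AE[OF opn hc] by blast
    then show thesis by (rule that)
  qed
  obtain x0 where x0: "x0 \<in> \<Omega>" "h x0 \<noteq> 0" using hnz by auto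
  define m where "m s = (LINT x|lebesgue_on (\<Omega> \<inter> ball 0 s). (h x)\<^sup>2)" for s
  define c where "c = C0 * measure lborel (ball (0::'n) r0) / 2"
  have cpos: "c > 0" unfolding c_def using content_ball_pos[OF r0, of 0] C0 by simp
  have Ss: "\<Omega> \<inter> ball 0 s \<subseteq> \<Omega>" "\<Omega> \<inter> ball 0 s \<in> sets lebesgue" "bounded (\<Omega> \<inter> ball 0 s)" for s
    using opn by (auto simp: borel_open)
  have bh: "bm (\<Omega> \<inter> ball 0 s) h" for s by (rule bm_contO[OF hc hB Ss(1,2)])
  have bh2: "bm (\<Omega> \<inter> ball 0 s) (\<lambda>x. (h x)\<^sup>2)" for s
    unfolding power2_eq_square by (intro bm_mult bh)
  note bint = bm_int[OF Ss]
  have m_mono: "m s \<le> m s'" if ss: "s \<le> s'" for s s'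
  proof -
    have sub: "\<Omega> \<inter> ball 0 s \<subseteq> \<Omega> \<inter> ball 0 s'" using ss by auto
    have "m s = (LINT x|lebesgue_on (\<Omega> \<inter> ball 0 s'). indicator (\<Omega> \<inter> ball 0 s) x * (h x)\<^sup>2)"
      unfolding m_def by (rule restrict_int[OF sub Ss(2) Ss(2)])
    also have "\<dots> \<le> m s'" unfolding m_def
    proof (rule integral_mono)
      show "integrable (lebesgue_on (\<Omega> \<inter> ball 0 s')) (\<lambda>x. indicator (\<Omega> \<inter> ball 0 s) x * (h x)\<^sup>2)"
        by (intro bint bm_mult bm_ind Ss(2) bh2)
      show "integrable (lebesgue_on (\<Omega> \<inter> ball 0 s')) (\<lambda>x. (h x)\<^sup>2)" by (intro bint bh2)
    qed (auto simp: indicator_def)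
    finally show ?thesis .
  qed
  have m_ub: "m s \<le> (Bh\<^sup>2 * unit_ball_vol (DIM('n))) * s ^ DIM('n)" if s: "s \<ge> 0" for s
  proof -
    let ?S = "\<Omega> \<inter> ball (0::'n) s"
    have "m s \<le> (LINT x|lebesgue_on ?S. Bh\<^sup>2)" unfolding m_def
    proof (rule integral_mono)
      show "integrable (lebesgue_on ?S) (\<lambda>x. (h x)\<^sup>2)" by (intro bint bh2)
      show "integrable (lebesgue_on ?S) (\<lambda>x. Bh\<^sup>2)" by (intro bint bm_const)
      fix x assume "x \<in> space (lebesgue_on ?S)"
      then have "\<bar>h x\<bar> \<le> Bh" using hB by auto
      then have "\<bar>h x\<bar>\<^sup>2 \<le> Bh\<^sup>2" by (intro power_mono) auto
      then show "(h x)\<^sup>2 \<le> Bh\<^sup>2" by simp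
    qed
    also have "\<dots> = measure (lebesgue_on ?S) ?S * Bh\<^sup>2" by simp
    also have "measure (lebesgue_on ?S) ?S = measure lebesgue ?S"
      using Ss[of s] by (intro measure_restrict_space) auto
    also have "\<dots> \<le> measure lebesgue (ball (0::'n) s)"
      using Ss[of s] by (intro measure_mono_fmeasurable) auto
    also have "\<dots> = unit_ball_vol (DIM('n)) * s ^ DIM('n)" using s by (simp add: content_ball)
    finally show ?thesis by (simp add: mult_right_mono algebra_simps)
  qed
  have m_pos: "m s > 0" if s: "s > norm x0" for s
  proof -
    let ?S = "\<Omega> \<inter> ball (0::'n) s"
    have x0S: "x0 \<in> ?S" using x0 s by auto
    have "m s \<ge> 0" unfolding m_def by simp
    moreover have "m s \<noteq> 0"
    proof
      assume "m s = 0"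
      then have "AE x in lebesgue_on ?S. (h x)\<^sup>2 = 0"
        using integral_nonneg_eq_0_iff_AE[OF bint[OF bh2]] unfolding m_def by simp
      then have "AE x in lebesgue_on ?S. \<bar>h x\<bar> \<le> 0" by (rule eventually_mono) simp
      moreover have "open ?S" using opn by auto
      moreover have "continuous_on ?S h" using hc by (rule continuous_on_subset) auto
      ultimately have "\<bar>h x0\<bar> \<le> 0" using cont_AE x0S by blast
      then show False using x0 by simp
    qed
    ultimately show ?thesis by simp
  qed
  have rq: "lambda_v K a (\<Omega> \<inter> ball 0 s) \<le> ereal (l + c * (m (s + r0) - m (s - r0)) / m s)" if ms: "m s > 0" for s
  proof -
    let ?S = "\<Omega> \<inter> ball (0::'n) s"
    define N where "N = (LINT x|lebesgue_on ?S. (nlop K ?S h x + a x * h x) * h x)"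
    have L2h: "L2 (lebesgue_on ?S) h"
      unfolding L2_def using bh[of s] bint[OF bh2] by (simp add: bm_def)
    have nz: "\<not> (AE x in lebesgue_on ?S. h x = 0)"
    proof
      assume "AE x in lebesgue_on ?S. h x = 0"
      then have "AE x in lebesgue_on ?S. (h x)\<^sup>2 = 0" by (rule eventually_mono) simp
      then have "m s = 0" unfolding m_def by (rule integral_eq_zero_AE)
      then show False using ms by simp
    qed
    have mem: "ereal (- N / m s) \<in> ereal ` {- (LINT x|lebesgue_on ?S. (nlop K ?S \<phi> x + a x * \<phi> x) * \<phi> x)
                                    / (LINT x|lebesgue_on ?S. (\<phi> x)\<^sup>2) | \<phi>.
        L2 (lebesgue_on ?S) \<phi> \<and> \<not> (AE x in lebesgue_on ?S. \<phi> x = 0)}"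
      unfolding N_def m_def using L2h nz by blast
    have "- N \<le> l * m s + c * (m (s + r0) - m (s - r0))"
      using ray[OF a hc hB hnn he, of s] unfolding N_def m_def c_def by simp
    then have "- N / m s \<le> (l * m s + c * (m (s + r0) - m (s - r0))) / m s"
      using ms by (intro divide_right_mono) auto
    also have "\<dots> = l + c * (m (s + r0) - m (s - r0)) / m s" using ms by (simp add: field_simps)
    finally have "ereal (- N / m s) \<le> ereal (l + c * (m (s + r0) - m (s - r0)) / m s)" by simp
    then show ?thesis unfolding lambda_v_def by (rule Inf_lower2[OF mem])
  qed
  define k where "k = nat \<lceil>r0\<rceil>"
  have cr: "(0::int) < \<lceil>r0\<rceil>" using r0 by simp
  have kr: "real k \<ge> r0" using cr by (simp add: k_def)
  have "nat 1 \<le> nat \<lceil>r0\<rceil>" using cr by (intro nat_mono) linarith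
  then have k1: "k \<ge> 1" by (simp add: k_def)
  define N1 where "N1 = max N0 (nat \<lceil>norm x0\<rceil> + 1)"
  have N1x: "real n > norm x0" if "n \<ge> N1" for n
  proof -
    have a1: "nat \<lceil>norm x0\<rceil> + 1 \<le> n" using that by (simp add: N1_def)
    have a2: "real (nat \<lceil>norm x0\<rceil>) \<ge> norm x0" by simp
    have "real (nat \<lceil>norm x0\<rceil> + 1) \<le> real n" using a1 by (rule of_nat_mono)
    then show ?thesis using a2 by (simp only: of_nat_add of_nat_1)
  qed
  define q where "q = 1 + \<epsilon> / c"
  have q1: "q > 1" using \<epsilon> cpos by (simp add: q_def)
  show False
  proof (rule growth[where m=m and q=q and C="Bh\<^sup>2 * unit_ball_vol (DIM('n))" and Nz=N1 and k=k and d="DIM('n)"])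
    show "\<And>s s'. s \<le> s' \<Longrightarrow> m s \<le> m s'" by (rule m_mono)
    show "q > 1" by (rule q1)
    show "m (real N1) > 0" by (rule m_pos[OF N1x]) simp
    show "1 \<le> k" by (rule k1)
    show "\<And>s. 0 \<le> s \<Longrightarrow> m s \<le> Bh\<^sup>2 * unit_ball_vol (DIM('n)) * s ^ DIM('n)" by (rule m_ub)
    fix n :: nat assume n: "N1 \<le> n"
    have mpos: "m (real n) > 0" by (rule m_pos[OF N1x[OF n]])
    have "ereal (l + \<epsilon>) < lambda_v K a (\<Omega> \<inter> ball 0 (real n))" using N0 n by (simp add: N1_def)
    also have "\<dots> \<le> ereal (l + c * (m (real n + r0) - m (real n - r0)) / m (real n))" by (rule rq[OF mpos])
    finally have "\<epsilon> < c * (m (real n + r0) - m (real n - r0)) / m (real n)" by simp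
    then have "\<epsilon> * m (real n) < c * (m (real n + r0) - m (real n - r0))"
      using mpos by (simp add: pos_less_divide_eq)
    then have d1: "\<epsilon> / c * m (real n) < m (real n + r0) - m (real n - r0)"
      using cpos by (simp add: field_simps)
    have mm: "m (real n - r0) \<le> m (real n)" using r0 by (intro m_mono) simp
    have "\<epsilon> / c * m (real n - r0) \<le> \<epsilon> / c * m (real n)"
      using mm \<epsilon> cpos by (intro mult_left_mono) auto
    then have st: "q * m (real n - r0) \<le> m (real n + r0)" using d1 by (simp add: q_def algebra_simps)
    have "q * m (real n - real k) \<le> q * m (real n - r0)"
      using q1 kr by (intro mult_left_mono m_mono) auto
    also have "\<dots> \<le> m (real n + r0)" by (rule st)
    also have "\<dots> \<le> m (real n + real k)" using kr by (intro m_mono) simp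
    finally show "q * m (real n - real k) \<le> m (real n + real k)" .
  qed
qed

end

theorem lemma3p3:
  fixes \<Omega> :: "'n::euclidean_space set"
    and a :: "'n \<Rightarrow> real"
    and K :: "'n \<Rightarrow> 'n \<Rightarrow> real"
    and r0 r1 C0 c0 :: real
  assumes dom: "open \<Omega>" "connected \<Omega>" "\<Omega> \<noteq> {}" "\<not> bounded \<Omega>"
    and a_cont: "continuous_on (closure \<Omega>) a"
    and a_inf: "Linfty (lebesgue_on \<Omega>) a"
    and K_nonneg: "\<forall>x\<in>\<Omega>. \<forall>y\<in>\<Omega>. K x y \<ge> 0"
    and K_meas: "\<forall>x\<in>\<Omega>. (\<lambda>y. K x y) \<in> borel_measurable (lebesgue_on \<Omega>)"
    and K_ucont: "AE y in lebesgue_on \<Omega>. uniformly_continuous_on \<Omega> (\<lambda>x. K x y)"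
    and radii: "r0 \<ge> r1" "r1 > 0"
    and cbounds: "C0 \<ge> c0" "c0 > 0"
    and K_bounds: "\<forall>x\<in>\<Omega>. \<forall>y\<in>\<Omega>.
         C0 * indicator (\<Omega> \<inter> ball x r0) y \<ge> K x y \<and> K x y \<ge> c0 * indicator (\<Omega> \<inter> ball x r1) y"
    and K_sym: "\<forall>x\<in>\<Omega>. \<forall>y\<in>\<Omega>. K x y = K y x"
    and p_inf: "Linfty (lebesgue_on \<Omega>) (\<lambda>x. LINT y|lebesgue_on \<Omega>. K x y)"
  shows "lambda_p K a \<Omega> \<le> liminf (\<lambda>n::nat. lambda_v K a (\<Omega> \<inter> ball 0 (real n)))
       \<and> liminf (\<lambda>n::nat. lambda_v K a (\<Omega> \<inter> ball 0 (real n))) \<le> lambda_p' K a \<Omega>"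
proof -
  have C0: "C0 > 0" using cbounds by linarith
  have r0: "r0 > 0" using radii by linarith
  interpret kern \<Omega> K r0 C0
  proof
    show "open \<Omega>" "\<Omega> \<noteq> {}" using dom by auto
    show "\<And>x y. x\<in>\<Omega> \<Longrightarrow> y\<in>\<Omega> \<Longrightarrow> K x y \<ge> 0" using K_nonneg by auto
    show "\<And>x y. x\<in>\<Omega> \<Longrightarrow> y\<in>\<Omega> \<Longrightarrow> K x y \<le> C0 * indicator (\<Omega> \<inter> ball x r0) y" using K_bounds by auto
    show "\<And>x. x\<in>\<Omega> \<Longrightarrow> K x \<in> borel_measurable (lebesgue_on \<Omega>)" using K_meas by auto
    show "AE y in lebesgue_on \<Omega>. uniformly_continuous_on \<Omega> (\<lambda>x. K x y)" by (rule K_ucont)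
    show "\<And>x y. x\<in>\<Omega> \<Longrightarrow> y\<in>\<Omega> \<Longrightarrow> K x y = K y x" using K_sym by auto
    show "C0 > 0" "r0 > 0" by (rule C0, rule r0)
  qed
  let ?f = "\<lambda>n::nat. lambda_v K a (\<Omega> \<inter> ball 0 (real n))"
  have P1: "lambda_p K a \<Omega> \<le> liminf ?f"
    unfolding lambda_p_def
  proof (rule Sup_least)
    fix z assume "z \<in> ereal ` {l. \<exists>\<phi>. continuous_on (closure \<Omega>) \<phi> \<and>
        (\<forall>x\<in>closure \<Omega>. \<phi> x > 0) \<and>
        (\<forall>x\<in>\<Omega>. nlop K \<Omega> \<phi> x + a x * \<phi> x + l * \<phi> x \<le> 0)}"
    then obtain l \<phi> where z: "z = ereal l" and \<phi>: "continuous_on (closure \<Omega>) \<phi>"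
      "\<forall>x\<in>closure \<Omega>. \<phi> x > 0" "\<forall>x\<in>\<Omega>. nlop K \<Omega> \<phi> x + a x * \<phi> x + l * \<phi> x \<le> 0"
      by blast
    have "\<forall>n. ereal l \<le> ?f n" using dir1[OF a_cont \<phi>] by blast
    then show "z \<le> liminf ?f" unfolding z by (intro Liminf_bounded always_eventually)
  qed
  have P2: "liminf ?f \<le> lambda_p' K a \<Omega>"
    unfolding lambda_p'_def
  proof (rule Inf_greatest)
    fix z assume "z \<in> ereal ` {l. \<exists>\<phi>. continuous_on \<Omega> \<phi> \<and> Linfty (lebesgue_on \<Omega>) \<phi> \<and>
        (\<forall>x\<in>\<Omega>. \<phi> x \<ge> 0) \<and> (\<exists>x\<in>\<Omega>. \<phi> x \<noteq> 0) \<and>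
        (\<forall>x\<in>\<Omega>. nlop K \<Omega> \<phi> x + (a x + l) * \<phi> x \<ge> 0)}"
    then obtain l \<phi> where z: "z = ereal l" and \<phi>: "continuous_on \<Omega> \<phi>" "Linfty (lebesgue_on \<Omega>) \<phi>"
      "\<forall>x\<in>\<Omega>. \<phi> x \<ge> 0" "\<exists>x\<in>\<Omega>. \<phi> x \<noteq> 0" "\<forall>x\<in>\<Omega>. nlop K \<Omega> \<phi> x + (a x + l) * \<phi> x \<ge> 0"
      by blast
    show "liminf ?f \<le> z" unfolding z
    proof (rule ereal_le_epsilon2)
      fix e :: real assume e: "e > 0"
      have fr: "\<forall>N. \<exists>n\<ge>N. ?f n \<le> ereal (l + e)" by (rule dir2[OF a_cont \<phi> e])
      have "liminf ?f \<le> ereal (l + e)" unfolding liminf_SUP_INF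
      proof (rule SUP_least)
        fix N :: nat
        obtain n where n: "n \<ge> N" "?f n \<le> ereal (l + e)" using fr by blast
        show "(INF m\<in>{N..}. ?f m) \<le> ereal (l + e)" by (rule INF_lower2[of n]) (use n in auto)
      qed
      then show "liminf ?f \<le> ereal l + ereal e" by simp
    qed
  qed
  show ?thesis using P1 P2 by blast
qed

end
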